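(* Let $n,k\in\mathbb N$ and $f\in\mathfrak Q_n^k(\mathbb R)$. Then: (a) for all $s,l\in\mathbb Z_{\ge0}$ with $s\le n\vee l$ and $l\le k$, the function $f^{(l)}u^s$ is in $C_0(\mathbb R)$ and has Fourier transform in $L^1(\mathbb R)$; (b) for all $s,l\in\mathbb Z_{\ge0}$ with $s\le n\vee l$ and $l\le k$, the function $(fu^s)^{(l)}$ is in $C_0(\mathbb R)$ and has Fourier transform in $L^1(\mathbb R)$; (c) $\mathfrak Q_n^k(\mathbb R)\subseteq\mathscr W_k(\mathbb R)$.
   Context: $u(x)=x-i$, $u^m$ denotes $x\mapsto(x-i)^m$, $x\vee y=\max\{x,y\}$. $\mathfrak Q_n^k(\mathbb R)$ is the set of $f\in C^k(\mathbb R)$ such that (i) $fu^{2n}$ is bounded and continuous, (ii) $f^{(l)}u^{n+l+1}\in C_0(\mathbb R)$ for $1\le l\le k$, (iii) $f^{(k)}u^{k\vee n}\in C_0(\mathbb R)$ and its Fourier transform is in $L^1(\mathbb R)$. $W_0(\mathbb R)$ is the set of $g\in C_0(\mathbb R)$ with $g(x)=\int e^{ixy}d\mu(y)$ for a finite complex Borel measure $\mu$, and $\mathscr W_k(\mathbb R)=\{f\in C^k(\mathbb R):(fu^p)^{(p)}\in W_0(\mathbb R),\ p=0,\dots,k\}$. *)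

theory Defs
  imports "HOL-Analysis.Analysis"
begin

definition vderiv :: "(real \<Rightarrow> complex) \<Rightarrow> (real \<Rightarrow> complex)" where
  "vderiv f = (\<lambda>x. vector_derivative f (at x))"

definition nderiv :: "nat \<Rightarrow> (real \<Rightarrow> complex) \<Rightarrow> (real \<Rightarrow> complex)" where
  "nderiv l f = (vderiv ^^ l) f"

definition Ck :: "nat \<Rightarrow> (real \<Rightarrow> complex) set" where
  "Ck k = {f. (\<forall>l<k. \<forall>x. nderiv l f differentiable (at x))
              \<and> continuous_on UNIV (nderiv k f)}"

definition upow :: "nat \<Rightarrow> real \<Rightarrow> complex" where
  "upow m = (\<lambda>x. (complex_of_real x - \<i>) ^ m)"

definition C0 :: "(real \<Rightarrow> complex) set" where
  "C0 = {g. continuous_on UNIV g \<and> (g \<longlongrightarrow> 0) at_infinity}"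

text \<open>The Fourier transform of g (as a tempered distribution) lies in L^1:
  g is the (inverse) Fourier integral of some integrable function.\<close>
definition FT_L1 :: "(real \<Rightarrow> complex) \<Rightarrow> bool" where
  "FT_L1 g = (\<exists>h :: real \<Rightarrow> complex. integrable lborel h \<and>
      (\<forall>x. g x = (\<integral>y. exp (\<i> * complex_of_real (x * y)) * h y \<partial>lborel)))"

definition Qnk :: "nat \<Rightarrow> nat \<Rightarrow> (real \<Rightarrow> complex) set" where
  "Qnk n k = {f. f \<in> Ck k
     \<and> continuous_on UNIV (\<lambda>x. f x * upow (2*n) x)
     \<and> bounded (range (\<lambda>x. f x * upow (2*n) x))
     \<and> (\<forall>l. 1 \<le> l \<and> l \<le> k \<longrightarrow> (\<lambda>x. nderiv l f x * upow (n+l+1) x) \<in> C0)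
     \<and> (\<lambda>x. nderiv k f x * upow (max k n) x) \<in> C0
     \<and> FT_L1 (\<lambda>x. nderiv k f x * upow (max k n) x)}"

text \<open>W_0(R): C_0 functions that are Fourier-Stieltjes transforms of a finite complex
  Borel measure; the complex measure is represented in polar form h d|mu| with
  |mu| a finite Borel measure M and h an M-integrable complex density.\<close>
definition W0 :: "(real \<Rightarrow> complex) set" where
  "W0 = {g. g \<in> C0 \<and> (\<exists>(M :: real measure) (h :: real \<Rightarrow> complex).
      finite_measure M \<and> sets M = sets borel \<and> integrable M h \<and>
      (\<forall>x. g x = (\<integral>y. exp (\<i> * complex_of_real (x * y)) * h y \<partial>M)))}"

definition Wk :: "nat \<Rightarrow> (real \<Rightarrow> complex) set" where
  "Wk k = {f. f \<in> Ck k \<and>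
     (\<forall>p\<le>k. nderiv p (\<lambda>x. f x * upow p x) \<in> W0)}"

end

theory Submission
  imports Defs "HOL-Probability.Probability" "HOL-Real_Asymp.Real_Asymp"
begin

lemma vd_quot:
  fixes f :: "real \<Rightarrow> complex"
  assumes "((\<lambda>h. (f (x+h) - f x) / complex_of_real h) \<longlongrightarrow> D) (at 0)"
  shows "(f has_vector_derivative D) (at x)"
proof -
  have "((\<lambda>h. norm ((f (x+h) - f x) / complex_of_real h - D)) \<longlongrightarrow> 0) (at 0)"
    using assms by (simp add: tendsto_norm_zero_iff LIM_zero_iff)
  then have "((\<lambda>h. norm (f (x + h) - f x - h *\<^sub>R D) / norm h) \<longlongrightarrow> 0) (at 0)"
  proof (rule Lim_transform_eventually)
    show "\<forall>\<^sub>F h in at 0. norm ((f (x+h) - f x) / complex_of_real h - D) = norm (f (x + h) - f x - h *\<^sub>R D) / norm h"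
      unfolding eventually_at_filter
    proof (rule always_eventually, intro allI impI)
      fix h :: real assume h: "h \<noteq> 0"
      have "(f (x+h) - f x) / complex_of_real h - D = (f (x + h) - f x - h *\<^sub>R D) / complex_of_real h"
        using h by (simp add: field_simps scaleR_conv_of_real)
      then show "norm ((f (x+h) - f x) / complex_of_real h - D) = norm (f (x + h) - f x - h *\<^sub>R D) / norm h"
        by (simp add: norm_divide)
    qed
  qed
  then show ?thesis
    unfolding has_vector_derivative_def has_derivative_at
    by (auto intro: bounded_linear_scaleR_left)
qed

definition ft :: "(real \<Rightarrow> complex) \<Rightarrow> real \<Rightarrow> complex" where
  "ft h x = (\<integral>y. exp (\<i> * complex_of_real (x * y)) * h y \<partial>lborel)"

lemma FT_L1_iff: "FT_L1 g \<longleftrightarrow> (\<exists>h. integrable lborel h \<and> g = ft h)"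
  by (auto simp: FT_L1_def ft_def fun_eq_iff)

lemma norm_iexp[simp]: "norm (exp (\<i> * complex_of_real t)) = 1"
  by (simp add: norm_exp_i_times)

lemma integrable_E:
  assumes "integrable lborel h"
  shows "integrable lborel (\<lambda>y. exp (\<i> * complex_of_real (x * y)) * h y)"
proof (rule Bochner_Integration.integrable_bound[OF assms])
  show "(\<lambda>y. exp (\<i> * complex_of_real (x * y)) * h y) \<in> borel_measurable lborel"
    using borel_measurable_integrable[OF assms] by measurable
  show "AE y in lborel. norm (exp (\<i> * complex_of_real (x * y)) * h y) \<le> norm (h y)"
    by (simp add: norm_mult)
qed

lemma ft_norm_le: "norm (ft h x) \<le> (\<integral>y. norm (h y) \<partial>lborel)"
  unfolding ft_def
  by (rule order_trans[OF integral_norm_bound]) (simp add: norm_mult)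

lemma ft_add:
  assumes "integrable lborel h1" "integrable lborel h2"
  shows "ft (\<lambda>y. h1 y + h2 y) x = ft h1 x + ft h2 x"
  unfolding ft_def using integrable_E[OF assms(1)] integrable_E[OF assms(2)]
  by (simp add: distrib_left)

lemma ft_cmult: "ft (\<lambda>y. c * h y) x = c * ft h x"
  unfolding ft_def by (simp add: mult.left_commute)

lemma ft_cong_AE:
  assumes [measurable]: "h \<in> borel_measurable lborel" "h' \<in> borel_measurable lborel"
  shows "AE y in lborel. h y = h' y \<Longrightarrow> ft h x = ft h' x"
  unfolding ft_def by (rule integral_cong_AE) (auto elim!: eventually_mono)

lemma FT_L1_add: "FT_L1 f \<Longrightarrow> FT_L1 g \<Longrightarrow> FT_L1 (\<lambda>x. f x + g x)"
  unfolding FT_L1_iff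
proof (elim exE conjE)
  fix h1 h2 assume "integrable lborel h1" "f = ft h1" "integrable lborel h2" "g = ft h2"
  then show "\<exists>h. integrable lborel h \<and> (\<lambda>x. f x + g x) = ft h"
    by (intro exI[of _ "\<lambda>y. h1 y + h2 y"]) (auto simp: ft_add)
qed

lemma FT_L1_cmult: "FT_L1 f \<Longrightarrow> FT_L1 (\<lambda>x. c * f x)"
  unfolding FT_L1_iff
proof (elim exE conjE)
  fix h1 assume "integrable lborel h1" "f = ft h1"
  then show "\<exists>h. integrable lborel h \<and> (\<lambda>x. c * f x) = ft h"
    by (intro exI[of _ "\<lambda>y. c * h1 y"]) (auto simp: ft_cmult)
qed

lemma FT_L1_zero: "FT_L1 (\<lambda>x. 0)"
  unfolding FT_L1_iff by (auto intro!: exI[of _ "\<lambda>y. 0"] simp: ft_def fun_eq_iff)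

lemma FT_L1_sum: "finite A \<Longrightarrow> (\<And>i. i \<in> A \<Longrightarrow> FT_L1 (f i)) \<Longrightarrow> FT_L1 (\<lambda>x. \<Sum>i\<in>A. f i x)"
  by (induction A rule: finite_induct) (auto intro: FT_L1_add FT_L1_zero)

lemma FT_L1_cong: "FT_L1 f \<Longrightarrow> (\<And>x. f x = g x) \<Longrightarrow> FT_L1 g"
  by (metis ext)

lemma ft_gauss:
  "ft (\<lambda>y. complex_of_real (std_normal_density y)) x = complex_of_real (exp (- (x^2) / 2))"
proof -
  have "char std_normal_distribution x = complex_of_real (exp (- (x^2) / 2))"
    by (simp add: char_std_normal_distribution)
  moreover have "char std_normal_distribution x = (\<integral>y. std_normal_density y *\<^sub>R exp (\<i> * complex_of_real (x * y)) \<partial>lborel)"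
    unfolding char_def by (subst integral_density) auto
  ultimately show ?thesis
    unfolding ft_def by (simp add: scaleR_conv_of_real mult.commute)
qed

lemma dct_at:
  fixes s :: "real \<Rightarrow> real \<Rightarrow> complex"
  assumes [measurable]: "\<And>t. s t \<in> borel_measurable lborel" "f \<in> borel_measurable lborel"
    and w: "integrable lborel w"
    and lim: "\<And>y. ((\<lambda>t. s t y) \<longlongrightarrow> f y) (at t0 within S)"
    and bd: "\<And>t y. t \<in> S \<Longrightarrow> norm (s t y) \<le> w y"
  shows "((\<lambda>t. \<integral>y. s t y \<partial>lborel) \<longlongrightarrow> (\<integral>y. f y \<partial>lborel)) (at t0 within S)"
  unfolding tendsto_at_iff_sequentially comp_def
proof (intro allI impI)
  fix X :: "nat \<Rightarrow> real" assume X: "\<forall>i. X i \<in> S - {t0}" "X \<longlonglongrightarrow> t0"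
  show "(\<lambda>i. \<integral>y. s (X i) y \<partial>lborel) \<longlonglongrightarrow> (\<integral>y. f y \<partial>lborel)"
  proof (rule integral_dominated_convergence[OF _ _ w])
    show "AE y in lborel. (\<lambda>i. s (X i) y) \<longlonglongrightarrow> f y"
      using lim X unfolding tendsto_at_iff_sequentially comp_def by auto
    show "AE y in lborel. norm (s (X i) y) \<le> w y" for i
      using bd X by auto
  qed auto
qed

lemma iexp_quot_bound:
  assumes "h \<noteq> 0"
  shows "norm ((exp (\<i> * complex_of_real (h*y)) - 1) / complex_of_real h - \<i> * complex_of_real y) \<le> \<bar>h\<bar> * y^2 / 2"
proof -
  note False = assms
  define A where "A = cmod (exp (\<i> * complex_of_real (h*y)) - (1 + \<i> * complex_of_real (h*y)))"
  have A: "A \<le> \<bar>h*y\<bar>^2 / 2"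
    using iexp_approx1[of "h*y" 1] unfolding A_def by (simp add: numeral_2_eq_2)
  have "(exp (\<i> * complex_of_real (h*y)) - 1) / complex_of_real h - \<i> * complex_of_real y
      = (exp (\<i> * complex_of_real (h*y)) - (1 + \<i> * complex_of_real (h*y))) / complex_of_real h"
    using False by (simp add: field_simps)
  then have "norm ((exp (\<i> * complex_of_real (h*y)) - 1) / complex_of_real h - \<i> * complex_of_real y) = A / \<bar>h\<bar>"
    by (simp add: A_def norm_divide)
  also have "\<dots> \<le> (\<bar>h*y\<bar>^2 / 2) / \<bar>h\<bar>"
    using A False by (intro divide_right_mono) auto
  also have "\<dots> = \<bar>h\<bar> * y^2 / 2"
    using False by (simp add: power2_eq_square abs_mult field_simps)
  finally show ?thesis .
qed

lemma iexp_minus1_bound: "norm (exp (\<i> * complex_of_real t) - 1) \<le> \<bar>t\<bar>"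
  using iexp_approx1[of t 0] by simp

lemma ft_has_deriv:
  assumes H: "integrable lborel H" and yH: "integrable lborel (\<lambda>y. complex_of_real y * H y)"
  shows "(ft H has_vector_derivative ft (\<lambda>y. \<i> * complex_of_real y * H y) x) (at x)"
proof (rule vd_quot)
  have [measurable]: "H \<in> borel_measurable lborel" using H by auto
  have eq: "(ft H (x+h) - ft H x) / complex_of_real h =
     (\<integral>y. exp (\<i> * complex_of_real (x * y)) * ((exp (\<i> * complex_of_real (h*y)) - 1) / complex_of_real h) * H y \<partial>lborel)" for h
  proof -
    have "ft H (x+h) - ft H x = (\<integral>y. exp (\<i> * complex_of_real ((x+h) * y)) * H y - exp (\<i> * complex_of_real (x * y)) * H y \<partial>lborel)"
      unfolding ft_def using integrable_E[OF H, of "x+h"] integrable_E[OF H, of x]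
      by (simp only: Bochner_Integration.integral_diff)
    also have "\<dots> = (\<integral>y. exp (\<i> * complex_of_real (x * y)) * (exp (\<i> * complex_of_real (h*y)) - 1) * H y \<partial>lborel)"
      by (intro Bochner_Integration.integral_cong refl) (simp add: algebra_simps distrib_left mult_exp_exp[symmetric])
    finally show ?thesis
      by (simp add: mult.assoc)
  qed
  show "((\<lambda>h. (ft H (x + h) - ft H x) / complex_of_real h) \<longlongrightarrow> ft (\<lambda>y. \<i> * complex_of_real y * H y) x) (at 0)"
    unfolding eq unfolding ft_def
  proof (rule dct_at[where w="\<lambda>y. 2 * norm (complex_of_real y * H y)"])
    show "integrable lborel (\<lambda>y. 2 * norm (complex_of_real y * H y))"
      using yH by auto
    fix y :: real
    have "((\<lambda>h. (exp (\<i> * complex_of_real (h*y)) - 1) / complex_of_real h - \<i> * complex_of_real y) \<longlongrightarrow> 0) (at 0)"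
    proof (rule Lim_null_comparison)
      show "\<forall>\<^sub>F h in at 0. norm ((exp (\<i> * complex_of_real (h*y)) - 1) / complex_of_real h - \<i> * complex_of_real y) \<le> \<bar>h\<bar> * y^2 / 2"
        unfolding eventually_at_filter by (intro always_eventually allI impI iexp_quot_bound)
      show "((\<lambda>h. \<bar>h\<bar> * y^2 / 2) \<longlongrightarrow> 0) (at 0)"
        by (auto intro!: tendsto_eq_intros)
    qed
    then have "((\<lambda>h. (exp (\<i> * complex_of_real (h*y)) - 1) / complex_of_real h) \<longlongrightarrow> \<i> * complex_of_real y) (at 0)"
      by (simp add: LIM_zero_iff)
    note lim1 = this
    show "((\<lambda>h. exp (\<i> * complex_of_real (x * y)) * ((exp (\<i> * complex_of_real (h*y)) - 1) / complex_of_real h) * H y)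
        \<longlongrightarrow> exp (\<i> * complex_of_real (x * y)) * (\<i> * complex_of_real y * H y)) (at 0 within UNIV)"
      using tendsto_mult[OF tendsto_mult[OF tendsto_const lim1] tendsto_const, of "exp (\<i> * complex_of_real (x * y))" "H y"]
      by (simp add: mult.assoc)
  next
    fix h y :: real
    have "norm ((exp (\<i> * complex_of_real (h*y)) - 1) / complex_of_real h) \<le> \<bar>y\<bar>"
    proof (cases "h = 0")
      case False
      then show ?thesis using iexp_minus1_bound[of "h*y"]
        by (simp add: norm_divide divide_simps abs_mult mult.commute)
    qed simp
    then have "norm ((exp (\<i> * complex_of_real (h*y)) - 1) / complex_of_real h) * norm (H y) \<le> \<bar>y\<bar> * norm (H y)"
      by (intro mult_right_mono) auto
    also have "\<dots> \<le> 2 * norm (complex_of_real y * H y)"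
      by (simp add: norm_mult)
    finally show "norm (exp (\<i> * complex_of_real (x * y)) * ((exp (\<i> * complex_of_real (h*y)) - 1) / complex_of_real h) * H y)
        \<le> 2 * norm (complex_of_real y * H y)"
      by (simp only: norm_mult norm_iexp mult_1_left)
  qed measurable
qed


lemma conv_nn_bound:
  fixes h1 h2 :: "real \<Rightarrow> complex"
  assumes h1: "integrable lborel h1" and h2: "integrable lborel h2"
  shows "(\<integral>\<^sup>+p. ennreal (norm (h1 (snd p - fst p)) * norm (h2 (fst p))) \<partial>(lborel \<Otimes>\<^sub>M lborel)) < \<infinity>"
proof -
  have [measurable]: "h1 \<in> borel_measurable borel" "h2 \<in> borel_measurable borel"
    using h1 h2 by auto
  have "(\<integral>\<^sup>+p. ennreal (norm (h1 (snd p - fst p)) * norm (h2 (fst p))) \<partial>(lborel \<Otimes>\<^sub>M lborel))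
      = (\<integral>\<^sup>+z. \<integral>\<^sup>+w. ennreal (norm (h1 (w - z)) * norm (h2 z)) \<partial>lborel \<partial>lborel)"
    by (subst lborel.nn_integral_fst[symmetric]) auto
  also have "\<dots> = (\<integral>\<^sup>+z. ennreal (norm (h2 z)) * (\<integral>\<^sup>+w. ennreal (norm (h1 w)) \<partial>lborel) \<partial>lborel)"
  proof (intro nn_integral_cong)
    fix z :: real
    have "(\<integral>\<^sup>+w. ennreal (norm (h1 (w - z)) * norm (h2 z)) \<partial>lborel) = (\<integral>\<^sup>+w. ennreal (norm (h1 (w - z))) * ennreal (norm (h2 z)) \<partial>lborel)"
      by (simp add: ennreal_mult)
    also have "\<dots> = (\<integral>\<^sup>+w. ennreal (norm (h1 (w - z))) \<partial>lborel) * ennreal (norm (h2 z))"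
      by (rule nn_integral_multc) measurable
    also have "(\<integral>\<^sup>+w. ennreal (norm (h1 (w - z))) \<partial>lborel) = (\<integral>\<^sup>+w. ennreal (norm (h1 w)) \<partial>lborel)"
      using nn_integral_real_affine[of "\<lambda>w. ennreal (norm (h1 w))" 1 "-z"] by simp
    finally show "(\<integral>\<^sup>+w. ennreal (norm (h1 (w - z)) * norm (h2 z)) \<partial>lborel) = ennreal (norm (h2 z)) * (\<integral>\<^sup>+w. ennreal (norm (h1 w)) \<partial>lborel)"
      by (simp add: mult.commute)
  qed
  also have "\<dots> = (\<integral>\<^sup>+z. ennreal (norm (h2 z)) \<partial>lborel) * (\<integral>\<^sup>+w. ennreal (norm (h1 w)) \<partial>lborel)"
    by (rule nn_integral_multc) measurable
  also have "\<dots> < \<infinity>"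
    using h1 h2 by (auto simp: integrable_iff_bounded ennreal_mult_less_top)
  finally show ?thesis .
qed

lemma conv_integrable:
  fixes h1 h2 :: "real \<Rightarrow> complex" and a :: "real \<Rightarrow> complex"
  assumes h1: "integrable lborel h1" and h2: "integrable lborel h2"
    and a[measurable]: "a \<in> borel_measurable borel" and abd: "\<And>w. norm (a w) \<le> 1"
  shows "integrable (lborel \<Otimes>\<^sub>M lborel) (\<lambda>(z,w). a w * h1 (w - z) * h2 z)"
proof -
  have [measurable]: "h1 \<in> borel_measurable borel" "h2 \<in> borel_measurable borel"
    using h1 h2 by auto
  show ?thesis
    unfolding integrable_iff_bounded
  proof
    show "(\<lambda>(z,w). a w * h1 (w - z) * h2 z) \<in> borel_measurable (lborel \<Otimes>\<^sub>M lborel)"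
      by measurable
    have "(\<integral>\<^sup>+p. ennreal (norm ((\<lambda>(z,w). a w * h1 (w - z) * h2 z) p)) \<partial>(lborel \<Otimes>\<^sub>M lborel))
        \<le> (\<integral>\<^sup>+p. ennreal (norm (h1 (snd p - fst p)) * norm (h2 (fst p))) \<partial>(lborel \<Otimes>\<^sub>M lborel))"
    proof (intro nn_integral_mono)
      fix p :: "real \<times> real"
      have "norm (a (snd p)) * (norm (h1 (snd p - fst p)) * norm (h2 (fst p))) \<le> 1 * (norm (h1 (snd p - fst p)) * norm (h2 (fst p)))"
        using abd by (intro mult_right_mono) auto
      then show "ennreal (norm ((\<lambda>(z,w). a w * h1 (w - z) * h2 z) p)) \<le> ennreal (norm (h1 (snd p - fst p)) * norm (h2 (fst p)))"
        by (cases p) (auto simp: norm_mult mult.assoc)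
    qed
    also have "\<dots> < \<infinity>" by (rule conv_nn_bound[OF h1 h2])
    finally show "(\<integral>\<^sup>+p. ennreal (norm ((\<lambda>(z,w). a w * h1 (w - z) * h2 z) p)) \<partial>(lborel \<Otimes>\<^sub>M lborel)) < \<infinity>" .
  qed
qed

lemma FT_L1_mult:
  assumes "FT_L1 f" "FT_L1 g"
  shows "FT_L1 (\<lambda>x. f x * g x)"
proof -
  obtain h1 h2 where h1: "integrable lborel h1" "f = ft h1" and h2: "integrable lborel h2" "g = ft h2"
    using assms unfolding FT_L1_iff by blast
  have [measurable]: "h1 \<in> borel_measurable borel" "h2 \<in> borel_measurable borel"
    using h1 h2 by auto
  define h where "h w = (\<integral>z. h1 (w - z) * h2 z \<partial>lborel)" for w
  have int0: "integrable (lborel \<Otimes>\<^sub>M lborel) (\<lambda>(z,w). 1 * h1 (w - z) * h2 z)"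
    by (rule conv_integrable[OF h1(1) h2(1)]) auto
  have hint: "integrable lborel h"
    using lborel_pair.integrable_snd[OF int0] unfolding h_def by simp
  have "ft h x = f x * g x" for x
  proof -
    have intx: "integrable (lborel \<Otimes>\<^sub>M lborel) (\<lambda>(z,w). exp (\<i> * complex_of_real (x * w)) * h1 (w - z) * h2 z)"
      by (rule conv_integrable[OF h1(1) h2(1)]) auto
    have "ft h x = (\<integral>w. \<integral>z. exp (\<i> * complex_of_real (x * w)) * h1 (w - z) * h2 z \<partial>lborel \<partial>lborel)"
      unfolding ft_def h_def by (simp add: mult.assoc)
    also have "\<dots> = (\<integral>z. \<integral>w. exp (\<i> * complex_of_real (x * w)) * h1 (w - z) * h2 z \<partial>lborel \<partial>lborel)"
      using lborel_pair.Fubini_integral[OF intx] by simp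
    also have "\<dots> = (\<integral>z. (exp (\<i> * complex_of_real (x * z)) * ft h1 x) * h2 z \<partial>lborel)"
    proof (intro Bochner_Integration.integral_cong refl)
      fix z :: real
      have "(\<integral>w. exp (\<i> * complex_of_real (x * w)) * h1 (w - z) * h2 z \<partial>lborel)
          = (\<integral>w. exp (\<i> * complex_of_real (x * w)) * h1 (w - z) \<partial>lborel) * h2 z"
        by simp
      also have "(\<integral>w. exp (\<i> * complex_of_real (x * w)) * h1 (w - z) \<partial>lborel)
          = (\<integral>v. exp (\<i> * complex_of_real (x * (z + v))) * h1 v \<partial>lborel)"
        using lborel_integral_real_affine[of 1 "\<lambda>w. exp (\<i> * complex_of_real (x * w)) * h1 (w - z)" z] by simp
      also have "\<dots> = (\<integral>v. exp (\<i> * complex_of_real (x * z)) * (exp (\<i> * complex_of_real (x * v)) * h1 v) \<partial>lborel)"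
        by (intro Bochner_Integration.integral_cong refl) (simp add: distrib_left algebra_simps exp_add[symmetric])
      also have "\<dots> = exp (\<i> * complex_of_real (x * z)) * ft h1 x"
        unfolding ft_def by simp
      finally show "(\<integral>w. exp (\<i> * complex_of_real (x * w)) * h1 (w - z) * h2 z \<partial>lborel) = (exp (\<i> * complex_of_real (x * z)) * ft h1 x) * h2 z" .
    qed
    also have "\<dots> = ft h1 x * ft h2 x"
      unfolding ft_def[of h2] by (simp add: mult.assoc mult.left_commute)
    finally show ?thesis using h1 h2 by simp
  qed
  then show ?thesis
    unfolding FT_L1_iff using hint by (intro exI[of _ h]) auto
qed


lemma exp_set_integrable: "set_integrable lborel (einterval (-\<infinity>) 0) (\<lambda>y::real. exp y)"
proof (rule interval_integral_FTC_nonneg(1)[where F=exp and A=0 and B=1])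
  show "((exp \<circ> real_of_ereal) \<longlongrightarrow> 0) (at_right (-\<infinity>))"
    unfolding ereal_tendsto_simps by (rule exp_at_bot)
  show "((exp \<circ> real_of_ereal) \<longlongrightarrow> 1) (at_left 0)"
    unfolding zero_ereal_def ereal_tendsto_simps
    by (metis exp_zero isCont_exp isCont_def tendsto_within_subset top_greatest)
qed (auto intro!: derivative_eq_intros)

lemma FT_L1_inv_u: "FT_L1 (\<lambda>x. 1 / (complex_of_real x - \<i>))"
proof -
  define A :: "real set" where "A = einterval (-\<infinity>) 0"
  have [measurable]: "A \<in> sets borel" unfolding A_def by simp
  define H where "H y = indicator A y *\<^sub>R (\<i> * exp (complex_of_real y))" for y
  have eint: "integrable lborel (\<lambda>y. indicator A y *\<^sub>R exp y)"
    using exp_set_integrable unfolding A_def set_integrable_def by simp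
  have Hint: "integrable lborel H"
  proof (rule Bochner_Integration.integrable_bound[OF eint])
    show "H \<in> borel_measurable lborel" unfolding H_def by measurable
    show "AE y in lborel. norm (H y) \<le> norm (indicator A y *\<^sub>R exp y)"
      by (auto simp: H_def norm_mult indicator_def)
  qed
  have "ft H x = 1 / (complex_of_real x - \<i>)" for x
  proof -
    define c where "c = 1 + \<i> * complex_of_real x"
    have c0: "c \<noteq> 0" unfolding c_def by (auto simp: complex_eq_iff)
    have eq: "ft H x = (LBINT y=-\<infinity>..0. \<i> * exp (c * complex_of_real y))"
      unfolding ft_def interval_lebesgue_integral_def set_lebesgue_integral_def H_def A_def c_def
      by (simp, intro Bochner_Integration.integral_cong refl)
         (auto simp: indicator_def algebra_simps exp_add[symmetric] mult_exp_exp)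
    also have "\<dots> = \<i> / c - 0"
    proof (rule interval_integral_FTC_integrable[where F="\<lambda>y. \<i> * exp (c * complex_of_real y) / c"])
      show "((\<lambda>y. \<i> * exp (c * complex_of_real y) / c) has_vector_derivative \<i> * exp (c * complex_of_real y)) (at y)" for y
      proof -
        have "((\<lambda>z. \<i> * exp (c * z) / c) has_field_derivative \<i> * exp (c * complex_of_real y)) (at (complex_of_real y))"
          using c0 by (auto intro!: derivative_eq_intros)
        then show ?thesis by (rule has_vector_derivative_real_field)
      qed
      show "isCont (\<lambda>y. \<i> * exp (c * complex_of_real y)) y" for y
        by (auto intro!: continuous_intros)
      show "set_integrable lborel (einterval (- \<infinity>) 0) (\<lambda>y. \<i> * exp (c * complex_of_real y))"
        unfolding set_integrable_def
      proof (rule Bochner_Integration.integrable_bound[OF eint])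
        show "(\<lambda>y. indicator (einterval (- \<infinity>) 0) y *\<^sub>R (\<i> * exp (c * complex_of_real y))) \<in> borel_measurable lborel"
          by measurable
        show "AE y in lborel. norm (indicator (einterval (- \<infinity>) 0) y *\<^sub>R (\<i> * exp (c * complex_of_real y))) \<le> norm (indicator A y *\<^sub>R exp y)"
          by (auto simp: A_def norm_mult indicator_def c_def norm_exp)
      qed
      show "(((\<lambda>y. \<i> * exp (c * complex_of_real y) / c) \<circ> real_of_ereal) \<longlongrightarrow> 0) (at_right (- \<infinity>))"
        unfolding ereal_tendsto_simps
      proof (rule tendsto_norm_zero_cancel)
        have "((\<lambda>y. exp y / norm c) \<longlongrightarrow> 0 / norm c) at_bot"
          by (intro tendsto_divide exp_at_bot tendsto_const) (use c0 in auto)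
        then show "((\<lambda>y. norm (\<i> * exp (c * complex_of_real y) / c)) \<longlongrightarrow> 0) at_bot"
          by (simp add: norm_divide norm_mult norm_exp c_def)
      qed
      show "(((\<lambda>y. \<i> * exp (c * complex_of_real y) / c) \<circ> real_of_ereal) \<longlongrightarrow> \<i> / c) (at_left 0)"
        unfolding zero_ereal_def ereal_tendsto_simps
      proof -
        have "((\<lambda>y. \<i> * exp (c * complex_of_real y) / c) \<longlongrightarrow> \<i> * exp (c * complex_of_real 0) / c) (at 0)"
          using c0 by (intro tendsto_intros)
        then show "((\<lambda>y. \<i> * exp (c * complex_of_real y) / c) \<longlongrightarrow> \<i> / c) (at_left 0)"
          by (simp add: filterlim_at_split)
      qed
    qed simp
    also have "\<i> / c - 0 = 1 / (complex_of_real x - \<i>)"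
    proof -
      have cc: "c = \<i> * (complex_of_real x - \<i>)" by (simp add: c_def algebra_simps)
      have "complex_of_real x - \<i> \<noteq> 0" by (auto simp: complex_eq_iff)
      then show ?thesis using c0 unfolding cc by (simp add: divide_simps)
    qed
    finally show ?thesis .
  qed
  then show ?thesis unfolding FT_L1_iff using Hint by (intro exI[of _ H]) auto
qed


lemma ft_zero_real:
  fixes a :: "real \<Rightarrow> real"
  assumes int: "integrable lborel a"
    and z: "\<And>x. (\<integral>y. a y *\<^sub>R exp (\<i> * complex_of_real (x * y)) \<partial>lborel) = 0"
  shows "AE y in lborel. a y = 0"
proof -
  have [measurable]: "a \<in> borel_measurable borel" using int by auto
  define ap where "ap y = max (a y) 0" for y
  define am where "am y = max (- a y) 0" for y
  have [measurable]: "ap \<in> borel_measurable borel" "am \<in> borel_measurable borel"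
    unfolding ap_def am_def by measurable
  have apint: "integrable lborel ap" unfolding ap_def using int by auto
  have amint: "integrable lborel am" unfolding am_def using int by auto
  have a_eq: "a y = ap y - am y" for y unfolding ap_def am_def by auto
  have nn: "0 \<le> ap y" "0 \<le> am y" for y unfolding ap_def am_def by auto
  have intE: "integrable lborel (\<lambda>y. b y *\<^sub>R exp (\<i> * complex_of_real (x * y)))"
    if "integrable lborel b" for b :: "real \<Rightarrow> real" and x
    using integrable_E[of "\<lambda>y. complex_of_real (b y)" x] that
    by (simp add: scaleR_conv_of_real mult.commute)
  have eqx: "(\<integral>y. ap y *\<^sub>R exp (\<i> * complex_of_real (x * y)) \<partial>lborel) = (\<integral>y. am y *\<^sub>R exp (\<i> * complex_of_real (x * y)) \<partial>lborel)" for x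
  proof -
    have "(\<integral>y. ap y *\<^sub>R exp (\<i> * complex_of_real (x * y)) \<partial>lborel) - (\<integral>y. am y *\<^sub>R exp (\<i> * complex_of_real (x * y)) \<partial>lborel)
        = (\<integral>y. a y *\<^sub>R exp (\<i> * complex_of_real (x * y)) \<partial>lborel)"
      using intE[OF apint, of x] intE[OF amint, of x]
      by (subst Bochner_Integration.integral_diff[symmetric]) (auto simp: a_eq scaleR_diff_left)
    then show ?thesis using z[of x] by simp
  qed
  define c where "c = (\<integral>y. ap y \<partial>lborel)"
  have c2: "c = (\<integral>y. am y \<partial>lborel)"
  proof -
    have "complex_of_real c = complex_of_real (\<integral>y. am y \<partial>lborel)"
      using eqx[of 0] apint amint by (simp add: c_def scaleR_conv_of_real)
    then show ?thesis by simp
  qed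
  have c0: "c \<ge> 0" unfolding c_def using nn by (simp add: integral_nonneg_AE)
  show ?thesis
  proof (cases "c = 0")
    case True
    have "AE y in lborel. ap y = 0" using True apint nn unfolding c_def
      by (subst integral_nonneg_eq_0_iff_AE[symmetric]) auto
    moreover have "AE y in lborel. am y = 0" using True amint nn unfolding c2
      by (subst integral_nonneg_eq_0_iff_AE[symmetric]) auto
    ultimately show ?thesis by eventually_elim (simp add: a_eq)
  next
    case False
    then have cpos: "c > 0" using c0 by simp
    define M1 where "M1 = density lborel (\<lambda>y. ennreal (ap y / c))"
    define M2 where "M2 = density lborel (\<lambda>y. ennreal (am y / c))"
    have rd: "real_distribution (density lborel (\<lambda>y. ennreal (b y / c)))"
      if bint: "integrable lborel b" and bnn: "\<And>y. 0 \<le> b y" and bc: "(\<integral>y. b y \<partial>lborel) = c"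
      for b :: "real \<Rightarrow> real"
    proof -
      have [measurable]: "b \<in> borel_measurable borel" using bint by auto
      have "(\<integral>\<^sup>+y. ennreal (b y / c) \<partial>lborel) = ennreal (\<integral>y. b y / c \<partial>lborel)"
        using bint bnn cpos by (intro nn_integral_eq_integral) auto
      also have "\<dots> = 1" using bc cpos by simp
      finally have "(\<integral>\<^sup>+y. ennreal (b y / c) \<partial>lborel) = 1" .
      then have "prob_space (density lborel (\<lambda>y. ennreal (b y / c)))"
        by (intro prob_spaceI) (simp add: emeasure_density)
      then show ?thesis
        unfolding real_distribution_def real_distribution_axioms_def by simp
    qed
    have rd1: "real_distribution M1" unfolding M1_def
      by (rule rd[OF apint]) (auto simp: nn c_def)
    have rd2: "real_distribution M2" unfolding M2_def
      by (rule rd[OF amint]) (auto simp: nn c2)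
    have chareq: "char M1 = char M2"
    proof
      fix x
      have "char M1 x = (\<integral>y. (ap y / c) *\<^sub>R exp (\<i> * complex_of_real (x * y)) \<partial>lborel)"
        unfolding char_def M1_def using nn cpos by (subst integral_density) (auto simp: mult.commute)
      also have "\<dots> = (1/c) *\<^sub>R (\<integral>y. ap y *\<^sub>R exp (\<i> * complex_of_real (x * y)) \<partial>lborel)"
        by (subst integral_scaleR_right[symmetric]) (simp add: scaleR_scaleR)
      also have "\<dots> = (1/c) *\<^sub>R (\<integral>y. am y *\<^sub>R exp (\<i> * complex_of_real (x * y)) \<partial>lborel)"
        by (simp only: eqx)
      also have "\<dots> = (\<integral>y. (am y / c) *\<^sub>R exp (\<i> * complex_of_real (x * y)) \<partial>lborel)"
        by (subst integral_scaleR_right[symmetric]) (simp add: scaleR_scaleR)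
      also have "\<dots> = char M2 x"
        unfolding char_def M2_def using nn cpos by (subst integral_density) (auto simp: mult.commute)
      finally show "char M1 x = char M2 x" .
    qed
    have "M1 = M2" by (rule Levy_uniqueness[OF rd1 rd2 chareq])
    then have "AE y in lborel. ennreal (ap y / c) = ennreal (am y / c)"
      unfolding M1_def M2_def
    proof (subst (asm) finite_density_unique)
      have "(\<integral>\<^sup>+y. ennreal (ap y / c) \<partial>lborel) = ennreal (\<integral>y. ap y / c \<partial>lborel)"
        using apint nn cpos by (intro nn_integral_eq_integral) auto
      then show "integral\<^sup>N lborel (\<lambda>y. ennreal (ap y / c)) \<noteq> \<infinity>" by simp
    qed (auto simp: nn cpos)
    then show ?thesis
    proof eventually_elim
      case (elim y)
      then have "ap y / c = am y / c" using nn[of y] cpos by (simp add: ennreal_inj)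
      then show ?case using cpos by (simp add: a_eq)
    qed
  qed
qed

lemma re_cnj_eq: "Re z *\<^sub>R e = (e * z + e * cnj z) / 2"
proof -
  have "e * z + e * cnj z = e * (z + cnj z)" by (simp add: distrib_left)
  also have "z + cnj z = complex_of_real (2 * Re z)" by (rule complex_add_cnj)
  finally show ?thesis by (simp add: scaleR_conv_of_real)
qed

lemma im_cnj_eq: "Im z *\<^sub>R e = (e * z - e * cnj z) / (2 * \<i>)"
proof -
  have "e * z - e * cnj z = e * (z - cnj z)" by (simp add: right_diff_distrib)
  also have "z - cnj z = complex_of_real (2 * Im z) * \<i>" by (rule complex_diff_cnj)
  finally show ?thesis by (simp add: scaleR_conv_of_real field_simps)
qed

lemma ft_zero_AE:
  assumes int: "integrable lborel \<psi>" and z: "\<And>x. ft \<psi> x = 0"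
  shows "AE y in lborel. \<psi> y = 0"
proof -
  have [measurable]: "\<psi> \<in> borel_measurable borel" using int by auto
  have cz: "(\<integral>y. exp (\<i> * complex_of_real (x * y)) * cnj (\<psi> y) \<partial>lborel) = 0" for x
  proof -
    have "(\<integral>y. exp (\<i> * complex_of_real (x * y)) * cnj (\<psi> y) \<partial>lborel)
        = (\<integral>y. cnj (exp (\<i> * complex_of_real ((-x) * y)) * \<psi> y) \<partial>lborel)"
      by (intro Bochner_Integration.integral_cong refl) (simp add: exp_cnj)
    also have "\<dots> = cnj (ft \<psi> (-x))" unfolding ft_def by (rule Bochner_Integration.integral_cnj)
    finally show ?thesis using z by simp
  qed
  have reint: "integrable lborel (\<lambda>y. Re (\<psi> y))" using int by auto
  have imint: "integrable lborel (\<lambda>y. Im (\<psi> y))" using int by auto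
  have "AE y in lborel. Re (\<psi> y) = 0"
  proof (rule ft_zero_real[OF reint])
    fix x
    have "(\<integral>y. Re (\<psi> y) *\<^sub>R exp (\<i> * complex_of_real (x * y)) \<partial>lborel)
       = (\<integral>y. (exp (\<i> * complex_of_real (x * y)) * \<psi> y + exp (\<i> * complex_of_real (x * y)) * cnj (\<psi> y)) / 2 \<partial>lborel)"
      by (intro Bochner_Integration.integral_cong refl re_cnj_eq)
    also have "\<dots> = (ft \<psi> x + (\<integral>y. exp (\<i> * complex_of_real (x * y)) * cnj (\<psi> y) \<partial>lborel)) / 2"
      using integrable_E[OF int, of x] integrable_E[of "\<lambda>y. cnj (\<psi> y)" x] int
      unfolding ft_def by simp
    also have "\<dots> = 0" using z cz by simp
    finally show "(\<integral>y. Re (\<psi> y) *\<^sub>R exp (\<i> * complex_of_real (x * y)) \<partial>lborel) = 0" .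
  qed
  moreover have "AE y in lborel. Im (\<psi> y) = 0"
  proof (rule ft_zero_real[OF imint])
    fix x
    have "(\<integral>y. Im (\<psi> y) *\<^sub>R exp (\<i> * complex_of_real (x * y)) \<partial>lborel)
       = (\<integral>y. (exp (\<i> * complex_of_real (x * y)) * \<psi> y - exp (\<i> * complex_of_real (x * y)) * cnj (\<psi> y)) / (2 * \<i>) \<partial>lborel)"
      by (intro Bochner_Integration.integral_cong refl im_cnj_eq)
    also have "\<dots> = (ft \<psi> x - (\<integral>y. exp (\<i> * complex_of_real (x * y)) * cnj (\<psi> y) \<partial>lborel)) / (2 * \<i>)"
      using integrable_E[OF int, of x] integrable_E[of "\<lambda>y. cnj (\<psi> y)" x] int
      unfolding ft_def by simp
    also have "\<dots> = 0" using z cz by simp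
    finally show "(\<integral>y. Im (\<psi> y) *\<^sub>R exp (\<i> * complex_of_real (x * y)) \<partial>lborel) = 0" .
  qed
  ultimately show ?thesis by eventually_elim (simp add: complex_eq_iff)
qed

definition mw :: "real \<Rightarrow> real" where "mw t = 1 / (sqrt \<bar>t\<bar> * (1 + \<bar>t\<bar>))"

lemma mw_nonneg: "0 \<le> mw t" by (simp add: mw_def)

lemma mw_pos_int: "set_integrable lborel (einterval 0 \<infinity>) mw"
proof (rule interval_integral_FTC_nonneg(1)[where F="\<lambda>t. 2 * arctan (sqrt t)" and A=0 and B=pi])
  show "DERIV (\<lambda>t. 2 * arctan (sqrt t)) x :> mw x" if "0 < ereal x" "ereal x < \<infinity>" for x
  proof -
    have x: "x > 0" using that by simp
    have sx: "sqrt x > 0" using x by simp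
    show ?thesis using x sx
      by (auto intro!: derivative_eq_intros simp: mw_def divide_simps)
  qed
  show "isCont mw x" if "0 < ereal x" "ereal x < \<infinity>" for x
    using that unfolding mw_def by (auto intro!: continuous_intros)
  show "(((\<lambda>t. 2 * arctan (sqrt t)) \<circ> real_of_ereal) \<longlongrightarrow> 0) (at_right 0)"
    unfolding zero_ereal_def ereal_tendsto_simps
  proof -
    have "((\<lambda>t. 2 * arctan (sqrt t)) \<longlongrightarrow> 2 * arctan (sqrt 0)) (at 0)"
      by (intro tendsto_intros)
    then show "((\<lambda>t. 2 * arctan (sqrt t)) \<longlongrightarrow> 0) (at_right 0)"
      by (simp add: filterlim_at_split)
  qed
  show "(((\<lambda>t. 2 * arctan (sqrt t)) \<circ> real_of_ereal) \<longlongrightarrow> pi) (at_left \<infinity>)"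
    unfolding ereal_tendsto_simps
  proof -
    have "((\<lambda>t. 2 * arctan (sqrt t)) \<longlongrightarrow> 2 * (pi/2)) at_top"
      by (intro tendsto_mult tendsto_const filterlim_compose[OF tendsto_arctan_at_top sqrt_at_top] filterlim_ident)
    then show "((\<lambda>t. 2 * arctan (sqrt t)) \<longlongrightarrow> pi) at_top" by simp
  qed
qed (auto simp: mw_nonneg)

lemma mw_int: "integrable lborel mw"
proof -
  have p: "integrable lborel (\<lambda>t. indicator {0<..} t * mw t)"
  proof -
    have "einterval 0 \<infinity> = {0<..}" by (auto simp: einterval_def)
    then show ?thesis using mw_pos_int unfolding set_integrable_def by simp
  qed
  have n: "integrable lborel (\<lambda>t. indicator {0<..} (0 + (-1) * t) * mw (0 + (-1) * t))"
    by (rule lborel_integrable_real_affine[OF p]) simp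
  have eq: "mw t = indicator {0<..} t * mw t + indicator {0<..} (0 + (-1) * t) * mw (0 + (-1) * t)" for t
    by (cases "t > 0"; cases "t < 0") (auto simp: mw_def indicator_def)
  show ?thesis by (subst eq[abs_def]) (intro Bochner_Integration.integrable_add p n)
qed

lemma mw_measurable[measurable]: "mw \<in> borel_measurable borel"
  unfolding mw_def by measurable

lemma inv_sq_le_mw: "t \<noteq> 0 \<Longrightarrow> 1 / (1 + t^2) \<le> 2 * mw t"
proof -
  assume t: "t \<noteq> 0"
  have s: "sqrt \<bar>t\<bar> > 0" using t by simp
  show ?thesis
  proof (cases "\<bar>t\<bar> \<le> 1")
    case True
    then have "sqrt \<bar>t\<bar> \<le> 1" by simp
    then have "sqrt \<bar>t\<bar> * (1 + \<bar>t\<bar>) \<le> 1 * 2" using True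
      by (intro mult_mono) auto
    moreover have D: "0 < sqrt \<bar>t\<bar> * (1 + \<bar>t\<bar>)" using s by simp
    ultimately have "1 \<le> 2 / (sqrt \<bar>t\<bar> * (1 + \<bar>t\<bar>))" by (simp add: le_divide_eq_1_pos)
    then have "1 \<le> 2 * mw t" unfolding mw_def by simp
    moreover have "1 / (1 + t^2) \<le> 1"
    proof -
      have "0 < 1 + t^2" by (simp add: add_pos_nonneg)
      then show ?thesis by (simp add: divide_le_eq_1)
    qed
    ultimately show ?thesis by linarith
  next
    case False
    have sq: "sqrt \<bar>t\<bar> \<le> \<bar>t\<bar>"
    proof -
      have "1 \<le> sqrt \<bar>t\<bar>" using False by simp
      then have "sqrt \<bar>t\<bar> * 1 \<le> sqrt \<bar>t\<bar> * sqrt \<bar>t\<bar>" by (intro mult_left_mono) auto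
      then show ?thesis by simp
    qed
    have "sqrt \<bar>t\<bar> * (1 + \<bar>t\<bar>) \<le> \<bar>t\<bar> * (1 + \<bar>t\<bar>)" using sq by (intro mult_right_mono) auto
    also have "\<dots> \<le> 2 * (1 + t^2)"
    proof -
      have "\<bar>t\<bar> * 1 \<le> \<bar>t\<bar> * \<bar>t\<bar>" using False by (intro mult_left_mono) auto
      moreover have "\<bar>t\<bar> * \<bar>t\<bar> = t^2" by (simp add: power2_eq_square abs_mult_self_eq)
      ultimately show ?thesis by (simp add: algebra_simps)
    qed
    finally have le: "sqrt \<bar>t\<bar> * (1 + \<bar>t\<bar>) \<le> 2 * (1 + t^2)" .
    have "2 / (2 * (1 + t^2)) \<le> 2 / (sqrt \<bar>t\<bar> * (1 + \<bar>t\<bar>))"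
      by (rule frac_le) (use le s in auto)
    moreover have "2 / (2 * (1 + t^2)) = 1 / (1 + t^2)"
      by (subst mult_divide_mult_cancel_left[of 2 1 "1 + t^2", symmetric]) auto
    ultimately show ?thesis unfolding mw_def by simp
  qed
qed

lemma sqrt_inv_sq_le_mw: "t \<noteq> 0 \<Longrightarrow> sqrt \<bar>t\<bar> / (1 + t^2) \<le> 2 * mw t"
proof -
  assume t: "t \<noteq> 0"
  define a where "a = sqrt \<bar>t\<bar>"
  have a: "a > 0" using t by (simp add: a_def)
  have ta: "\<bar>t\<bar> = a^2" by (simp add: a_def)
  have t2: "t^2 = a^4" proof -
    have "t^2 = \<bar>t\<bar>^2" by simp
    also have "\<dots> = a^4" by (simp add: ta flip: power_mult)
    finally show ?thesis .
  qed
  have key: "a * (a * (1 + a^2)) \<le> 2 * (1 + a^4)"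
  proof -
    have "0 \<le> (a^2 - 1/2)^2 + 7/4" by simp
    then show ?thesis by (simp add: power2_eq_square power4_eq_xxxx algebra_simps)
  qed
  have "a / (1 + a^4) \<le> 2 * (1 / (a * (1 + a^2)))"
    using a key by (simp add: divide_simps add_pos_nonneg)
  moreover have sq: "sqrt \<bar>t\<bar> = a" by (simp add: a_def)
  ultimately show ?thesis unfolding mw_def sq unfolding ta t2 by blast
qed

lemma inv_sqrt_le_mw: "t \<noteq> 0 \<Longrightarrow> \<bar>t\<bar> \<le> 1 \<Longrightarrow> 1 / sqrt \<bar>t\<bar> \<le> 2 * mw t"
proof -
  assume t: "t \<noteq> 0" "\<bar>t\<bar> \<le> 1"
  have s: "sqrt \<bar>t\<bar> > 0" using t by simp
  have "sqrt \<bar>t\<bar> * (1 + \<bar>t\<bar>) \<le> 2 * sqrt \<bar>t\<bar>" using t s by simp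
  moreover have "sqrt \<bar>t\<bar> * (1 + \<bar>t\<bar>) > 0" using s by simp
  ultimately show ?thesis using s unfolding mw_def by (simp add: divide_simps mult.commute)
qed


lemma prod_integrable:
  fixes F :: "real \<times> real \<Rightarrow> complex" and a b :: "real \<Rightarrow> real"
  assumes F[measurable]: "F \<in> borel_measurable (lborel \<Otimes>\<^sub>M lborel)"
    and a: "integrable lborel a" and b: "integrable lborel b"
    and bd: "\<And>x y. norm (F (x, y)) \<le> norm (a x) * norm (b y)"
  shows "integrable (lborel \<Otimes>\<^sub>M lborel) F"
  unfolding integrable_iff_bounded
proof
  show "F \<in> borel_measurable (lborel \<Otimes>\<^sub>M lborel)" by (rule F)
  have [measurable]: "a \<in> borel_measurable borel" "b \<in> borel_measurable borel" using a b by auto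
  have "(\<integral>\<^sup>+p. ennreal (norm (F p)) \<partial>(lborel \<Otimes>\<^sub>M lborel)) \<le> (\<integral>\<^sup>+p. ennreal (norm (a (fst p)) * norm (b (snd p))) \<partial>(lborel \<Otimes>\<^sub>M lborel))"
    using bd by (intro nn_integral_mono) (metis ennreal_leI prod.collapse)
  also have "\<dots> = (\<integral>\<^sup>+x. \<integral>\<^sup>+y. ennreal (norm (a x)) * ennreal (norm (b y)) \<partial>lborel \<partial>lborel)"
    by (subst lborel.nn_integral_fst[symmetric]) (auto simp: ennreal_mult)
  also have "\<dots> = (\<integral>\<^sup>+x. ennreal (norm (a x)) * (\<integral>\<^sup>+y. ennreal (norm (b y)) \<partial>lborel) \<partial>lborel)"
    by (intro nn_integral_cong nn_integral_cmult) auto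
  also have "\<dots> = (\<integral>\<^sup>+x. ennreal (norm (a x)) \<partial>lborel) * (\<integral>\<^sup>+y. ennreal (norm (b y)) \<partial>lborel)"
    by (rule nn_integral_multc) auto
  also have "\<dots> < \<infinity>" using a b by (auto simp: integrable_iff_bounded ennreal_mult_less_top)
  finally show "(\<integral>\<^sup>+p. ennreal (norm (F p)) \<partial>(lborel \<Otimes>\<^sub>M lborel)) < \<infinity>" .
qed

lemma vd_zero_const:
  fixes D :: "real \<Rightarrow> complex"
  assumes "\<And>x. (D has_vector_derivative 0) (at x)"
  shows "D x = D y"
proof -
  have "\<exists>c. \<forall>x\<in>UNIV. D x = c"
    by (rule has_derivative_zero_constant[of UNIV]) (use assms in \<open>auto simp: has_vector_derivative_def\<close>)
  then show ?thesis by auto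
qed

lemma iexp_minus1_sqrt: "norm (exp (\<i> * complex_of_real t) - 1) \<le> 2 * sqrt \<bar>t\<bar>"
proof (cases "\<bar>t\<bar> \<le> 4")
  case True
  have "norm (exp (\<i> * complex_of_real t) - 1) \<le> \<bar>t\<bar>" by (rule iexp_minus1_bound)
  also have "\<bar>t\<bar> = sqrt \<bar>t\<bar> * sqrt \<bar>t\<bar>" by simp
  also have "\<dots> \<le> 2 * sqrt \<bar>t\<bar>"
  proof (rule mult_right_mono)
    show "sqrt \<bar>t\<bar> \<le> 2" using True real_sqrt_le_mono[of "\<bar>t\<bar>" 4] by simp
  qed simp
  finally show ?thesis .
next
  case False
  have "norm (exp (\<i> * complex_of_real t) - 1) \<le> norm (exp (\<i> * complex_of_real t)) + norm (1::complex)"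
    by (rule norm_triangle_ineq4)
  also have "\<dots> = 2" by simp
  also have "2 \<le> 2 * sqrt \<bar>t\<bar>" using False by simp
  finally show ?thesis .
qed

abbreviation Ng :: "real \<Rightarrow> real" where "Ng \<equiv> std_normal_density"

lemma Ng_int: "integrable lborel Ng" by simp
lemma Ng_nonneg: "0 \<le> Ng y" by simp
lemma Ng_pos: "0 < Ng y" by (simp add: normal_density_pos)
lemma Ng_le1: "Ng y \<le> 1"
proof -
  have "1 \<le> sqrt (2 * pi)" using pi_ge_two by simp
  moreover have "exp (- y\<^sup>2 / 2) \<le> 1" by simp
  ultimately have "exp (- y\<^sup>2 / 2) \<le> sqrt (2 * pi)" by linarith
  then show ?thesis unfolding std_normal_density_def
    by (simp add: divide_simps)
qed
lemma Ng_even: "Ng (-y) = Ng y" unfolding std_normal_density_def by simp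
lemma ft_Ng: "ft (\<lambda>y. complex_of_real (Ng y)) x = complex_of_real (sqrt (2*pi) * Ng x)"
proof -
  have "ft (\<lambda>y. complex_of_real (Ng y)) x = complex_of_real (exp (- (x^2) / 2))" by (rule ft_gauss)
  also have "\<dots> = complex_of_real (sqrt (2*pi) * Ng x)"
    unfolding std_normal_density_def by simp
  finally show ?thesis .
qed


lemma ft_cont: "integrable lborel H \<Longrightarrow> continuous_on UNIV (ft H)"
proof -
  assume H: "integrable lborel H"
  have [measurable]: "H \<in> borel_measurable borel" using H by auto
  have "isCont (ft H) x" for x
    unfolding isCont_def ft_def
  proof (rule dct_at[where w="\<lambda>y. norm (H y)"])
    show "integrable lborel (\<lambda>y. norm (H y))" using H by auto
    fix y
    show "((\<lambda>t. exp (\<i> * complex_of_real (t * y)) * H y) \<longlongrightarrow> exp (\<i> * complex_of_real (x * y)) * H y) (at x within UNIV)"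
      by (auto intro!: tendsto_eq_intros)
  qed (auto simp: norm_mult)
  then show ?thesis by (simp add: continuous_at_imp_continuous_on)
qed

lemma ft_measurable[measurable]: "integrable lborel H \<Longrightarrow> ft H \<in> borel_measurable borel"
  by (rule borel_measurable_continuous_onI) (rule ft_cont)

lemma inversion_AE:
  assumes psi: "integrable lborel \<psi>" and Gint: "integrable lborel G" and eq: "\<And>x. G x = ft \<psi> x"
  shows "AE y in lborel. \<psi> y = ft G (-y) / complex_of_real (2*pi)"
proof -
  define \<psi>2 where "\<psi>2 y = ft G (-y) / complex_of_real (2*pi)" for y
  define Nc where "Nc y = complex_of_real (Ng y)" for y
  define r where "r = sqrt (2*pi)"
  have r: "r > 0" "r * r = 2 * pi" unfolding r_def by auto
  have [measurable]: "\<psi> \<in> borel_measurable borel" "G \<in> borel_measurable borel" using psi Gint by auto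
  have [measurable]: "Nc \<in> borel_measurable borel" unfolding Nc_def by measurable
  have [measurable]: "\<psi>2 \<in> borel_measurable borel"
    unfolding \<psi>2_def using ft_measurable[OF Gint] by measurable
  have Nc_int: "integrable lborel Nc" unfolding Nc_def by simp
  have normNc: "norm (Nc y) = Ng y" for y unfolding Nc_def by simp
  define C where "C = (\<integral>t. norm (G t) \<partial>lborel) / (2*pi)"
  have psi2_bd: "norm (\<psi>2 y) \<le> C" for y
    unfolding \<psi>2_def C_def using ft_norm_le[of G "-y"] pi_gt_zero by (simp add: norm_divide divide_right_mono)
  have int1: "integrable lborel (\<lambda>y. \<psi> y * Nc y)"
    by (rule Bochner_Integration.integrable_bound[OF psi]) (auto simp: norm_mult normNc Ng_le1 mult_left_le)
  have int2: "integrable lborel (\<lambda>y. \<psi>2 y * Nc y)"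
  proof (rule Bochner_Integration.integrable_bound[of _ "\<lambda>y. C * Ng y"])
    show "integrable lborel (\<lambda>y. C * Ng y)" by simp
    show "AE y in lborel. norm (\<psi>2 y * Nc y) \<le> norm (C * Ng y)"
    proof (intro AE_I2)
      fix y
      have "norm (\<psi>2 y * Nc y) = norm (\<psi>2 y) * Ng y" by (simp add: norm_mult normNc)
      also have "\<dots> \<le> C * Ng y" by (rule mult_right_mono[OF psi2_bd Ng_nonneg])
      also have "\<dots> \<le> norm (C * Ng y)" by simp
      finally show "norm (\<psi>2 y * Nc y) \<le> norm (C * Ng y)" .
    qed
  qed simp
  have key: "ft (\<lambda>y. \<psi> y * Nc y) x = ft (\<lambda>y. \<psi>2 y * Nc y) x" for x
  proof -
    have NcF: "Nc y = (\<integral>s. exp (\<i> * complex_of_real (y * s)) * Nc s \<partial>lborel) / complex_of_real r" for y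
      using ft_Ng[of y] r unfolding ft_def Nc_def r_def by simp
    have I1: "integrable (lborel \<Otimes>\<^sub>M lborel) (\<lambda>(y,s). exp (\<i> * complex_of_real (x * y)) * \<psi> y * (exp (\<i> * complex_of_real (y * s)) * Nc s))"
      by (rule prod_integrable[where a="\<lambda>y. norm (\<psi> y)" and b=Ng]) (auto simp: psi norm_mult normNc)
    have "ft (\<lambda>y. \<psi> y * Nc y) x = (\<integral>y. (\<integral>s. exp (\<i> * complex_of_real (x * y)) * \<psi> y * (exp (\<i> * complex_of_real (y * s)) * Nc s) \<partial>lborel) \<partial>lborel) / complex_of_real r"
      unfolding ft_def by (subst NcF) (simp add: mult.assoc)
    also have "(\<integral>y. (\<integral>s. exp (\<i> * complex_of_real (x * y)) * \<psi> y * (exp (\<i> * complex_of_real (y * s)) * Nc s) \<partial>lborel) \<partial>lborel)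
        = (\<integral>s. (\<integral>y. exp (\<i> * complex_of_real (x * y)) * \<psi> y * (exp (\<i> * complex_of_real (y * s)) * Nc s) \<partial>lborel) \<partial>lborel)"
      using lborel_pair.Fubini_integral[OF I1] by simp
    also have "\<dots> = (\<integral>s. G (x + s) * Nc s \<partial>lborel)"
    proof (intro Bochner_Integration.integral_cong refl)
      fix s
      have "(\<integral>y. exp (\<i> * complex_of_real (x * y)) * \<psi> y * (exp (\<i> * complex_of_real (y * s)) * Nc s) \<partial>lborel)
          = (\<integral>y. exp (\<i> * complex_of_real ((x + s) * y)) * \<psi> y \<partial>lborel) * Nc s"
        by (subst integral_mult_left_zero[symmetric], intro Bochner_Integration.integral_cong refl)
           (simp add: algebra_simps exp_add[symmetric] mult_exp_exp)
      also have "\<dots> = G (x + s) * Nc s" unfolding eq ft_def ..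
      finally show "(\<integral>y. exp (\<i> * complex_of_real (x * y)) * \<psi> y * (exp (\<i> * complex_of_real (y * s)) * Nc s) \<partial>lborel) = G (x + s) * Nc s" .
    qed
    finally have L: "ft (\<lambda>y. \<psi> y * Nc y) x = (\<integral>s. G (x + s) * Nc s \<partial>lborel) / complex_of_real r" .
    have I2: "integrable (lborel \<Otimes>\<^sub>M lborel) (\<lambda>(y,t). exp (\<i> * complex_of_real (x * y)) * (exp (\<i> * complex_of_real ((-y) * t)) * G t) * Nc y)"
      by (rule prod_integrable[where a=Ng and b="\<lambda>t. norm (G t)"]) (auto simp: Gint norm_mult normNc)
    have "ft (\<lambda>y. \<psi>2 y * Nc y) x = (\<integral>y. (\<integral>t. exp (\<i> * complex_of_real (x * y)) * (exp (\<i> * complex_of_real ((-y) * t)) * G t) * Nc y \<partial>lborel) \<partial>lborel) / complex_of_real (2*pi)"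
    proof -
      have "ft (\<lambda>y. \<psi>2 y * Nc y) x = (\<integral>y. (\<integral>t. exp (\<i> * complex_of_real (x * y)) * (exp (\<i> * complex_of_real ((-y) * t)) * G t) * Nc y \<partial>lborel) / complex_of_real (2*pi) \<partial>lborel)"
        unfolding ft_def
      proof (intro Bochner_Integration.integral_cong refl)
        fix y
        have "(\<integral>t. exp (\<i> * complex_of_real (x * y)) * (exp (\<i> * complex_of_real ((-y) * t)) * G t) * Nc y \<partial>lborel)
            = exp (\<i> * complex_of_real (x * y)) * (\<integral>t. exp (\<i> * complex_of_real ((-y) * t)) * G t \<partial>lborel) * Nc y"
          by simp
        then show "exp (\<i> * complex_of_real (x * y)) * (\<psi>2 y * Nc y) = (\<integral>t. exp (\<i> * complex_of_real (x * y)) * (exp (\<i> * complex_of_real ((-y) * t)) * G t) * Nc y \<partial>lborel) / complex_of_real (2*pi)"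
          unfolding \<psi>2_def ft_def by simp
      qed
      then show ?thesis by simp
    qed
    also have "(\<integral>y. (\<integral>t. exp (\<i> * complex_of_real (x * y)) * (exp (\<i> * complex_of_real ((-y) * t)) * G t) * Nc y \<partial>lborel) \<partial>lborel)
       = (\<integral>t. (\<integral>y. exp (\<i> * complex_of_real (x * y)) * (exp (\<i> * complex_of_real ((-y) * t)) * G t) * Nc y \<partial>lborel) \<partial>lborel)"
      using lborel_pair.Fubini_integral[OF I2] by simp
    also have "\<dots> = (\<integral>t. G t * (complex_of_real r * Nc (x - t)) \<partial>lborel)"
    proof (intro Bochner_Integration.integral_cong refl)
      fix t
      have "(\<integral>y. exp (\<i> * complex_of_real (x * y)) * (exp (\<i> * complex_of_real ((-y) * t)) * G t) * Nc y \<partial>lborel)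
          = G t * ft Nc (x - t)"
        unfolding ft_def
        by (subst integral_mult_right_zero[symmetric], intro Bochner_Integration.integral_cong refl)
           (simp add: algebra_simps exp_add[symmetric] mult_exp_exp)
      also have "ft Nc (x - t) = complex_of_real r * Nc (x - t)"
        using ft_Ng[of "x - t"] unfolding Nc_def r_def by simp
      finally show "(\<integral>y. exp (\<i> * complex_of_real (x * y)) * (exp (\<i> * complex_of_real ((-y) * t)) * G t) * Nc y \<partial>lborel) = G t * (complex_of_real r * Nc (x - t))" .
    qed
    also have "\<dots> = complex_of_real r * (\<integral>t. G t * Nc (x - t) \<partial>lborel)"
      by (subst integral_mult_right_zero[symmetric]) (simp add: mult.left_commute)
    also have "(\<integral>t. G t * Nc (x - t) \<partial>lborel) = (\<integral>s. G (x + s) * Nc s \<partial>lborel)"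
    proof -
      have "(\<integral>t. G t * Nc (x - t) \<partial>lborel) = (\<integral>s. G (x + 1 * s) * Nc (x - (x + 1 * s)) \<partial>lborel)"
        using lborel_integral_real_affine[of 1 "\<lambda>t. G t * Nc (x - t)" x] by simp
      also have "\<dots> = (\<integral>s. G (x + s) * Nc s \<partial>lborel)"
        by (simp add: Nc_def Ng_even)
      finally show ?thesis .
    qed
    finally have R: "ft (\<lambda>y. \<psi>2 y * Nc y) x = complex_of_real r * (\<integral>s. G (x + s) * Nc s \<partial>lborel) / complex_of_real (2*pi)" .
    have "complex_of_real r / complex_of_real (2*pi) = 1 / complex_of_real r"
      using r by (simp add: field_simps flip: of_real_mult)
    moreover have "complex_of_real r * A / complex_of_real (2*pi) = A * (complex_of_real r / complex_of_real (2*pi))" for A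
      by simp
    ultimately show ?thesis unfolding L R by simp
  qed
  have "AE y in lborel. (\<psi> y - \<psi>2 y) * Nc y = 0"
  proof (rule ft_zero_AE)
    show "integrable lborel (\<lambda>y. (\<psi> y - \<psi>2 y) * Nc y)"
      using int1 int2 by (simp add: left_diff_distrib)
    fix x
    have "ft (\<lambda>y. (\<psi> y - \<psi>2 y) * Nc y) x = ft (\<lambda>y. \<psi> y * Nc y) x - ft (\<lambda>y. \<psi>2 y * Nc y) x"
      unfolding ft_def using integrable_E[OF int1, of x] integrable_E[OF int2, of x]
      by (subst Bochner_Integration.integral_diff[symmetric]) (auto simp: algebra_simps)
    then show "ft (\<lambda>y. (\<psi> y - \<psi>2 y) * Nc y) x = 0" using key[of x] by simp
  qed
  then show ?thesis
  proof eventually_elim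
    case (elim y)
    have "Nc y \<noteq> 0" unfolding Nc_def using Ng_pos[of y] by simp
    then show ?case using elim unfolding \<psi>2_def by simp
  qed
qed

lemma gauss_tendsto_inf: "((\<lambda>z::real. exp (- (z^2) / 2)) \<longlongrightarrow> 0) at_infinity"
  unfolding at_infinity_eq_at_top_bot
  by (rule filterlim_sup) real_asymp+

lemma scale_tendsto:
  fixes q :: "real \<Rightarrow> 'a::topological_space"
  assumes "(q \<longlongrightarrow> l) at_infinity" "y \<noteq> 0"
  shows "(\<lambda>j. q (real (Suc j) * y)) \<longlonglongrightarrow> l"
proof -
  have "filterlim (\<lambda>j. real (Suc j) * y) at_infinity sequentially"
  proof (rule filterlim_norm_at_top_imp_at_infinity)
    have "filterlim (\<lambda>j. real (Suc j) * \<bar>y\<bar>) at_top sequentially"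
    proof -
      have "\<bar>y\<bar> > 0" using assms(2) by simp
      then show ?thesis by real_asymp
    qed
    then show "filterlim (\<lambda>j. norm (real (Suc j) * y)) at_top sequentially"
      by (simp add: abs_mult)
  qed
  from filterlim_compose[OF assms(1) this] show ?thesis by simp
qed


lemma int_Nc: "(\<integral>s. complex_of_real (Ng s) \<partial>lborel) = 1"
proof -
  have "ft (\<lambda>y. complex_of_real (Ng y)) 0 = complex_of_real (sqrt (2*pi) * Ng 0)" by (rule ft_Ng)
  moreover have "sqrt (2*pi) * Ng 0 = 1" unfolding std_normal_density_def by simp
  ultimately show ?thesis unfolding ft_def by simp
qed

lemma avg_zero:
  fixes H g :: "real \<Rightarrow> complex"
  assumes Hint: "integrable lborel H" and gmeas[measurable]: "g \<in> borel_measurable borel"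
    and gbd: "\<And>x. norm (g x) \<le> Bg" and glim: "(g \<longlongrightarrow> 0) at_infinity"
    and eq: "\<And>x. ft H x - g x = c"
  shows "c = 0"
proof -
  define Nc where "Nc y = complex_of_real (Ng y)" for y
  have [measurable]: "Nc \<in> borel_measurable borel" unfolding Nc_def by measurable
  have [measurable]: "H \<in> borel_measurable borel" using Hint by auto
  have [measurable]: "ft H \<in> borel_measurable borel" using ft_measurable[OF Hint] .
  have normNc: "norm (Nc y) = Ng y" for y unfolding Nc_def by simp
  define CH where "CH = (\<integral>y. norm (H y) \<partial>lborel)"
  have int1: "integrable lborel (\<lambda>s. ft H (k * s) * Nc s)" for k
  proof (rule Bochner_Integration.integrable_bound[of _ "\<lambda>s. CH * Ng s"])
    show "AE s in lborel. norm (ft H (k * s) * Nc s) \<le> norm (CH * Ng s)"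
    proof (intro AE_I2)
      fix s
      have "norm (ft H (k * s) * Nc s) = norm (ft H (k * s)) * Ng s" by (simp add: norm_mult normNc)
      also have "\<dots> \<le> CH * Ng s" unfolding CH_def by (rule mult_right_mono[OF ft_norm_le Ng_nonneg])
      also have "\<dots> \<le> norm (CH * Ng s)" by simp
      finally show "norm (ft H (k * s) * Nc s) \<le> norm (CH * Ng s)" .
    qed
  qed auto
  have int2: "integrable lborel (\<lambda>s. g (k * s) * Nc s)" for k
  proof (rule Bochner_Integration.integrable_bound[of _ "\<lambda>s. Bg * Ng s"])
    show "AE s in lborel. norm (g (k * s) * Nc s) \<le> norm (Bg * Ng s)"
    proof (intro AE_I2)
      fix s
      have "norm (g (k * s) * Nc s) = norm (g (k * s)) * Ng s" by (simp add: norm_mult normNc)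
      also have "\<dots> \<le> Bg * Ng s" by (rule mult_right_mono[OF gbd Ng_nonneg])
      also have "\<dots> \<le> norm (Bg * Ng s)" by simp
      finally show "norm (g (k * s) * Nc s) \<le> norm (Bg * Ng s)" .
    qed
  qed auto
  have diff: "(\<integral>s. ft H (k * s) * Nc s \<partial>lborel) - (\<integral>s. g (k * s) * Nc s \<partial>lborel) = c" for k
  proof -
    have "(\<integral>s. ft H (k * s) * Nc s \<partial>lborel) - (\<integral>s. g (k * s) * Nc s \<partial>lborel)
        = (\<integral>s. (ft H (k * s) - g (k * s)) * Nc s \<partial>lborel)"
      using int1[of k] int2[of k] by (subst Bochner_Integration.integral_diff[symmetric]) (auto simp: algebra_simps)
    also have "\<dots> = (\<integral>s. c * Nc s \<partial>lborel)" by (simp add: eq)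
    also have "\<dots> = c" using int_Nc unfolding Nc_def by simp
    finally show ?thesis .
  qed
  have A1: "(\<integral>s. ft H (k * s) * Nc s \<partial>lborel) = (\<integral>y. complex_of_real (exp (- ((k * y)^2) / 2)) * H y \<partial>lborel)" for k
  proof -
    have I: "integrable (lborel \<Otimes>\<^sub>M lborel) (\<lambda>(s,y). exp (\<i> * complex_of_real ((k * s) * y)) * H y * Nc s)"
      by (rule prod_integrable[where a=Ng and b="\<lambda>y. norm (H y)"]) (auto simp: Hint norm_mult normNc)
    have "(\<integral>s. ft H (k * s) * Nc s \<partial>lborel) = (\<integral>s. (\<integral>y. exp (\<i> * complex_of_real ((k * s) * y)) * H y * Nc s \<partial>lborel) \<partial>lborel)"
      unfolding ft_def by simp
    also have "\<dots> = (\<integral>y. (\<integral>s. exp (\<i> * complex_of_real ((k * s) * y)) * H y * Nc s \<partial>lborel) \<partial>lborel)"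
      using lborel_pair.Fubini_integral[OF I] by simp
    also have "\<dots> = (\<integral>y. complex_of_real (exp (- ((k * y)^2) / 2)) * H y \<partial>lborel)"
    proof (intro Bochner_Integration.integral_cong refl)
      fix y
      have "(\<integral>s. exp (\<i> * complex_of_real ((k * s) * y)) * H y * Nc s \<partial>lborel) = ft Nc (k * y) * H y"
        unfolding ft_def by (subst integral_mult_left_zero[symmetric]) (simp add: algebra_simps)
      also have "ft Nc (k * y) = complex_of_real (exp (- ((k * y)^2) / 2))"
        unfolding Nc_def by (rule ft_gauss)
      finally show "(\<integral>s. exp (\<i> * complex_of_real ((k * s) * y)) * H y * Nc s \<partial>lborel) = complex_of_real (exp (- ((k * y)^2) / 2)) * H y" .
    qed
    finally show ?thesis .
  qed
  have L1: "(\<lambda>j. \<integral>s. ft H (real (Suc j) * s) * Nc s \<partial>lborel) \<longlonglongrightarrow> 0"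
    unfolding A1
  proof -
    have "(\<lambda>j. \<integral>y. complex_of_real (exp (- ((real (Suc j) * y)^2) / 2)) * H y \<partial>lborel) \<longlonglongrightarrow> (\<integral>(y::real). 0 \<partial>lborel)"
    proof (rule integral_dominated_convergence[where w="\<lambda>y. norm (H y)" and f="\<lambda>y. 0"
        and s="\<lambda>j y. complex_of_real (exp (- ((real (Suc j) * y)^2) / 2)) * H y"])
      show "integrable lborel (\<lambda>y. norm (H y))" using Hint by auto
      show "AE y in lborel. (\<lambda>j. complex_of_real (exp (- ((real (Suc j) * y)^2) / 2)) * H y) \<longlonglongrightarrow> 0"
        using AE_lborel_singleton[of 0]
      proof eventually_elim
        case (elim y)
        have "(\<lambda>j. exp (- ((real (Suc j) * y)^2) / 2)) \<longlonglongrightarrow> 0"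
          using scale_tendsto[OF gauss_tendsto_inf elim] by simp
        then have "(\<lambda>j. complex_of_real (exp (- ((real (Suc j) * y)^2) / 2)) * H y) \<longlonglongrightarrow> complex_of_real 0 * H y"
          by (intro tendsto_intros)
        then show ?case by simp
      qed
      show "AE y in lborel. norm (complex_of_real (exp (- ((real (Suc j) * y)^2) / 2)) * H y) \<le> norm (H y)" for j
        by (intro AE_I2) (simp add: norm_mult mult_left_le_one_le)
    qed auto
    then show "(\<lambda>j. \<integral>y. complex_of_real (exp (- ((real (Suc j) * y)^2) / 2)) * H y \<partial>lborel) \<longlonglongrightarrow> 0" by simp
  qed
  have L2: "(\<lambda>j. \<integral>s. g (real (Suc j) * s) * Nc s \<partial>lborel) \<longlonglongrightarrow> 0"
  proof -
    have "(\<lambda>j. \<integral>s. g (real (Suc j) * s) * Nc s \<partial>lborel) \<longlonglongrightarrow> (\<integral>(y::real). 0 \<partial>lborel)"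
    proof (rule integral_dominated_convergence[where w="\<lambda>s. Bg * Ng s"])
      show "integrable lborel (\<lambda>s. Bg * Ng s)" by simp
      show "AE s in lborel. (\<lambda>j. g (real (Suc j) * s) * Nc s) \<longlonglongrightarrow> 0"
        using AE_lborel_singleton[of 0]
      proof eventually_elim
        case (elim s)
        have "(\<lambda>j. g (real (Suc j) * s)) \<longlonglongrightarrow> 0"
          by (rule scale_tendsto[OF glim elim])
        then have "(\<lambda>j. g (real (Suc j) * s) * Nc s) \<longlonglongrightarrow> 0 * Nc s"
          by (intro tendsto_intros)
        then show ?case by simp
      qed
      show "AE s in lborel. norm (g (real (Suc j) * s) * Nc s) \<le> Bg * Ng s" for j
        by (intro AE_I2) (simp add: norm_mult normNc mult_right_mono[OF gbd Ng_nonneg])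
    qed auto
    then show ?thesis by simp
  qed
  have "(\<lambda>j. c) \<longlonglongrightarrow> 0 - 0"
    using tendsto_diff[OF L1 L2] by (simp add: diff)
  then show ?thesis by (simp add: LIMSEQ_const_iff)
qed


lemma bounded_C0_fun:
  fixes g :: "real \<Rightarrow> complex"
  assumes cont: "continuous_on UNIV g" and lim: "(g \<longlongrightarrow> 0) at_infinity"
  shows "\<exists>B. \<forall>x. norm (g x) \<le> B"
proof -
  have "\<forall>\<^sub>F x in at_infinity. dist (g x) 0 < 1" using lim by (rule tendstoD) simp
  then obtain b where b: "\<And>x. norm x \<ge> b \<Longrightarrow> norm (g x) < 1"
    unfolding eventually_at_infinity by auto
  have "compact (g ` cball 0 b)"
    by (rule compact_continuous_image[OF continuous_on_subset[OF cont]]) auto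
  then obtain B where B: "\<And>y. y \<in> g ` cball 0 b \<Longrightarrow> norm y \<le> B"
    using compact_imp_bounded bounded_iff by metis
  have "norm (g x) \<le> max B 1" for x
  proof (cases "norm x \<ge> b")
    case True then show ?thesis using b[of x] by simp
  next
    case False then have "x \<in> cball 0 b" by simp
    then show ?thesis using B[of "g x"] by auto
  qed
  then show ?thesis by blast
qed

lemma int_zero_deriv:
  fixes g g' :: "real \<Rightarrow> complex"
  assumes deriv: "\<And>x. (g has_vector_derivative g' x) (at x)"
    and contg': "continuous_on UNIV g'"
    and lim: "(g \<longlongrightarrow> 0) at_infinity"
    and int: "integrable lborel g'"
  shows "(\<integral>t. g' t \<partial>lborel) = 0"
proof -
  have "(LBINT t=-\<infinity>..\<infinity>. g' t) = 0 - 0"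
  proof (rule interval_integral_FTC_integrable[where F=g])
    show "isCont g' x" for x using contg' by (simp add: continuous_on_eq_continuous_at)
    show "set_integrable lborel (einterval (-\<infinity>) \<infinity>) g'"
      using int unfolding set_integrable_def by simp
    show "((g \<circ> real_of_ereal) \<longlongrightarrow> 0) (at_right (-\<infinity>))"
      unfolding ereal_tendsto_simps using filterlim_mono[OF lim order_refl at_bot_le_at_infinity] .
    show "((g \<circ> real_of_ereal) \<longlongrightarrow> 0) (at_left \<infinity>)"
      unfolding ereal_tendsto_simps using filterlim_mono[OF lim order_refl at_top_le_at_infinity] .
  qed (auto simp: deriv)
  then show ?thesis
    unfolding interval_lebesgue_integral_def set_lebesgue_integral_def by simp
qed

lemma KL:
  fixes g g' :: "real \<Rightarrow> complex" and B :: real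
  assumes deriv: "\<And>x. (g has_vector_derivative g' x) (at x)"
    and contg': "continuous_on UNIV g'"
    and lim: "(g \<longlongrightarrow> 0) at_infinity"
    and FTg': "FT_L1 g'"
    and bound: "\<And>t. norm (g' t) * (1 + t^2) \<le> B"
  shows "FT_L1 g"
proof -
  have [measurable]: "g' \<in> borel_measurable borel"
    by (rule borel_measurable_continuous_onI[OF contg'])
  have contg: "continuous_on UNIV g"
    by (rule continuous_on_vector_derivative) (use deriv has_vector_derivative_at_within in blast)
  have [measurable]: "g \<in> borel_measurable borel"
    by (rule borel_measurable_continuous_onI[OF contg])
  have B0: "0 \<le> B" using bound[of 0] norm_ge_zero[of "g' 0"] by (smt (verit) mult_cancel_left1 power_zero_numeral add_0_right)
  have g'bd: "norm (g' t) \<le> B * (1 / (1 + t^2))" for t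
  proof -
    have p: "0 < 1 + t^2" by (simp add: add_pos_nonneg)
    then show ?thesis using bound[of t] by (simp add: divide_simps)
  qed
  have g'int: "integrable lborel g'"
  proof (rule Bochner_Integration.integrable_bound[of _ "\<lambda>t. 2 * B * mw t"])
    show "integrable lborel (\<lambda>t. 2 * B * mw t)" using mw_int by simp
    show "AE t in lborel. norm (g' t) \<le> norm (2 * B * mw t)"
      using AE_lborel_singleton[of 0]
    proof eventually_elim
      case (elim t)
      have "norm (g' t) \<le> B * (1 / (1 + t^2))" by (rule g'bd)
      also have "\<dots> \<le> B * (2 * mw t)" by (rule mult_left_mono[OF inv_sq_le_mw[OF elim] B0])
      also have "\<dots> \<le> norm (2 * B * mw t)" using B0 mw_nonneg[of t] by simp
      finally show ?case .
    qed
  qed auto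
  have wint: "integrable lborel (\<lambda>t. sqrt \<bar>t\<bar> * norm (g' t))"
  proof (rule Bochner_Integration.integrable_bound[of _ "\<lambda>t. 2 * B * mw t"])
    show "integrable lborel (\<lambda>t. 2 * B * mw t)" using mw_int by simp
    show "AE t in lborel. norm (sqrt \<bar>t\<bar> * norm (g' t)) \<le> norm (2 * B * mw t)"
      using AE_lborel_singleton[of 0]
    proof eventually_elim
      case (elim t)
      have "norm (sqrt \<bar>t\<bar> * norm (g' t)) = sqrt \<bar>t\<bar> * norm (g' t)" by simp
      also have "\<dots> \<le> sqrt \<bar>t\<bar> * (B * (1 / (1 + t^2)))" by (rule mult_left_mono[OF g'bd]) simp
      also have "\<dots> = B * (sqrt \<bar>t\<bar> / (1 + t^2))" by simp
      also have "\<dots> \<le> B * (2 * mw t)" by (rule mult_left_mono[OF sqrt_inv_sq_le_mw[OF elim] B0])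
      also have "\<dots> \<le> norm (2 * B * mw t)" using B0 mw_nonneg[of t] by simp
      finally show ?case .
    qed
  qed auto
  have int0: "(\<integral>t. g' t \<partial>lborel) = 0"
    by (rule int_zero_deriv[OF deriv contg' lim g'int])
  obtain \<psi> where psi: "integrable lborel \<psi>" and geq: "g' = ft \<psi>"
    using FTg' unfolding FT_L1_iff by blast
  have [measurable]: "\<psi> \<in> borel_measurable borel" using psi by auto
  have AEpsi: "AE y in lborel. \<psi> y = ft g' (-y) / complex_of_real (2*pi)"
    by (rule inversion_AE[OF psi g'int]) (simp add: geq)
  define C where "C = (\<integral>t. sqrt \<bar>t\<bar> * norm (g' t) \<partial>lborel) / pi"
  have C0: "0 \<le> C" unfolding C_def by (intro divide_nonneg_pos integral_nonneg_AE) auto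
  have psi2bd: "norm (ft g' (-y) / complex_of_real (2*pi)) \<le> C * sqrt \<bar>y\<bar>" for y
  proof -
    have "ft g' (-y) = (\<integral>t. (exp (\<i> * complex_of_real ((-y) * t)) - 1) * g' t \<partial>lborel)"
      unfolding ft_def using integrable_E[OF g'int, of "-y"] g'int int0
      by (simp add: left_diff_distrib Bochner_Integration.integral_diff)
    then have "norm (ft g' (-y)) \<le> (\<integral>t. norm ((exp (\<i> * complex_of_real ((-y) * t)) - 1) * g' t) \<partial>lborel)"
      by (simp add: integral_norm_bound)
    also have "\<dots> \<le> (\<integral>t. 2 * sqrt \<bar>y\<bar> * (sqrt \<bar>t\<bar> * norm (g' t)) \<partial>lborel)"
    proof (rule integral_mono)
      show "integrable lborel (\<lambda>t. norm ((exp (\<i> * complex_of_real ((-y) * t)) - 1) * g' t))"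
      proof (rule Bochner_Integration.integrable_bound[of _ "\<lambda>t. 2 * norm (g' t)"])
        show "integrable lborel (\<lambda>t. 2 * norm (g' t))" using g'int by simp
        show "AE t in lborel. norm (norm ((exp (\<i> * complex_of_real ((-y) * t)) - 1) * g' t)) \<le> norm (2 * norm (g' t))"
        proof (intro AE_I2)
          fix t
          have "norm (exp (\<i> * complex_of_real ((-y) * t)) - 1) \<le> norm (exp (\<i> * complex_of_real ((-y) * t))) + norm (1::complex)"
            by (rule norm_triangle_ineq4)
          then have "norm (exp (\<i> * complex_of_real ((-y) * t)) - 1) \<le> 2" by simp
          then show "norm (norm ((exp (\<i> * complex_of_real ((-y) * t)) - 1) * g' t)) \<le> norm (2 * norm (g' t))"
            by (simp add: norm_mult mult_right_mono)
        qed
      qed auto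
      show "integrable lborel (\<lambda>t. 2 * sqrt \<bar>y\<bar> * (sqrt \<bar>t\<bar> * norm (g' t)))" using wint by simp
      fix t
      have "norm (exp (\<i> * complex_of_real ((-y) * t)) - 1) \<le> 2 * sqrt \<bar>(-y) * t\<bar>" by (rule iexp_minus1_sqrt)
      also have "\<dots> = 2 * sqrt \<bar>y\<bar> * sqrt \<bar>t\<bar>" by (simp add: abs_mult real_sqrt_mult)
      finally have "norm (exp (\<i> * complex_of_real ((-y) * t)) - 1) * norm (g' t) \<le> (2 * sqrt \<bar>y\<bar> * sqrt \<bar>t\<bar>) * norm (g' t)"
        by (rule mult_right_mono) simp
      then show "norm ((exp (\<i> * complex_of_real ((-y) * t)) - 1) * g' t) \<le> 2 * sqrt \<bar>y\<bar> * (sqrt \<bar>t\<bar> * norm (g' t))"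
        by (metis norm_mult mult.assoc)
    qed
    also have "\<dots> = 2 * sqrt \<bar>y\<bar> * (\<integral>t. sqrt \<bar>t\<bar> * norm (g' t) \<partial>lborel)" by simp
    finally have "norm (ft g' (-y)) \<le> 2 * sqrt \<bar>y\<bar> * (\<integral>t. sqrt \<bar>t\<bar> * norm (g' t) \<partial>lborel)" .
    then show ?thesis unfolding C_def using pi_gt_zero
      by (simp add: norm_divide divide_simps) (simp add: algebra_simps)
  qed
  define H where "H y = \<psi> y / (\<i> * complex_of_real y)" for y
  have [measurable]: "H \<in> borel_measurable borel" unfolding H_def by measurable
  have Hint: "integrable lborel H"
  proof (rule Bochner_Integration.integrable_bound[of _ "\<lambda>y. 2 * C * mw y + norm (\<psi> y)"])
    show "integrable lborel (\<lambda>y. 2 * C * mw y + norm (\<psi> y))" using mw_int psi by simp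
    show "AE y in lborel. norm (H y) \<le> norm (2 * C * mw y + norm (\<psi> y))"
      using AE_lborel_singleton[of 0] AEpsi
    proof eventually_elim
      case (elim y)
      have nH: "norm (H y) = norm (\<psi> y) / \<bar>y\<bar>" unfolding H_def by (simp add: norm_divide norm_mult)
      have rhs: "2 * C * mw y + norm (\<psi> y) \<le> norm (2 * C * mw y + norm (\<psi> y))" by simp
      show ?case
      proof (cases "\<bar>y\<bar> \<le> 1")
        case True
        have "norm (H y) = norm (ft g' (-y) / complex_of_real (2*pi)) / \<bar>y\<bar>" using nH elim by simp
        also have "\<dots> \<le> C * sqrt \<bar>y\<bar> / \<bar>y\<bar>" by (rule divide_right_mono[OF psi2bd]) simp
        also have "C * sqrt \<bar>y\<bar> / \<bar>y\<bar> = C * (1 / sqrt \<bar>y\<bar>)"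
        proof -
          have "\<bar>y\<bar> = sqrt \<bar>y\<bar> * sqrt \<bar>y\<bar>" by simp
          then show ?thesis using elim by (simp add: field_simps)
        qed
        also have "\<dots> \<le> C * (2 * mw y)" by (rule mult_left_mono[OF inv_sqrt_le_mw[OF elim(1) True] C0])
        also have "\<dots> \<le> 2 * C * mw y + norm (\<psi> y)" by simp
        finally show ?thesis using rhs by linarith
      next
        case False
        have "norm (H y) \<le> norm (\<psi> y)" unfolding nH using False
          by (simp add: divide_le_eq)  (metis mult_le_cancel_left1 mult.commute norm_ge_zero linorder_not_le less_eq_real_def order_trans)
        also have "\<dots> \<le> 2 * C * mw y + norm (\<psi> y)" using C0 mw_nonneg[of y] by simp
        finally show ?thesis using rhs by linarith
      qed
    qed
  qed auto
  have AEyH: "AE y in lborel. \<i> * complex_of_real y * H y = \<psi> y"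
    using AE_lborel_singleton[of 0] by eventually_elim (simp add: H_def)
  have yHint: "integrable lborel (\<lambda>y. complex_of_real y * H y)"
  proof -
    have i1: "integrable lborel (\<lambda>y. - \<i> * \<psi> y)" using psi by simp
    have a1: "AE y in lborel. - \<i> * \<psi> y = complex_of_real y * H y"
      using AE_lborel_singleton[of 0] by eventually_elim (simp add: H_def)
    show ?thesis by (rule integrable_cong_AE_imp[OF i1 _ a1]) measurable
  qed
  have dH: "(ft H has_vector_derivative g' x) (at x)" for x
  proof -
    have "(ft H has_vector_derivative ft (\<lambda>y. \<i> * complex_of_real y * H y) x) (at x)"
      by (rule ft_has_deriv[OF Hint yHint])
    moreover have "ft (\<lambda>y. \<i> * complex_of_real y * H y) x = ft \<psi> x"
      by (rule ft_cong_AE[OF _ _ AEyH]) auto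
    ultimately show ?thesis by (simp add: geq)
  qed
  have dD: "((\<lambda>x. ft H x - g x) has_vector_derivative 0) (at x)" for x
    using has_vector_derivative_diff[OF dH deriv] by simp
  have Dc: "ft H x - g x = ft H 0 - g 0" for x
    using vd_zero_const[OF dD] .
  obtain Bg where Bg: "\<And>x. norm (g x) \<le> Bg" using bounded_C0_fun[OF contg lim] by blast
  have "ft H 0 - g 0 = 0"
    by (rule avg_zero[OF Hint _ Bg lim Dc]) simp
  then have "g = ft H" using Dc by (auto simp: fun_eq_iff)
  then show ?thesis unfolding FT_L1_iff using Hint by blast
qed

lemma upow_add: "upow (a + b) x = upow a x * upow b x"
  unfolding upow_def by (simp add: power_add)

lemma upow_0[simp]: "upow 0 x = 1" unfolding upow_def by simp

lemma norm_u_ge1: "1 \<le> norm (complex_of_real x - \<i>)"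
  using abs_Im_le_cmod[of "complex_of_real x - \<i>"] by simp

lemma norm_u_ge_abs: "\<bar>x\<bar> \<le> norm (complex_of_real x - \<i>)"
  using abs_Re_le_cmod[of "complex_of_real x - \<i>"] by simp

lemma norm_upow: "norm (upow m x) = norm (complex_of_real x - \<i>) ^ m"
  unfolding upow_def by (simp add: norm_power)

lemma norm_upow_ge1: "1 \<le> norm (upow m x)"
  unfolding norm_upow using norm_u_ge1 by (rule one_le_power)

lemma norm_upow_mono: assumes "q \<le> p" shows "norm (upow q x) \<le> norm (upow p x)"
  unfolding norm_upow by (rule power_increasing[OF assms norm_u_ge1])

lemma upow_nz: "upow m x \<noteq> 0"
  using norm_upow_ge1[of m x] by auto

lemma norm_upow2: "norm (upow 2 x) = 1 + x^2"
proof -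
  have "norm (complex_of_real x - \<i>) = sqrt (x^2 + 1)"
    by (simp add: cmod_def)
  then show ?thesis unfolding norm_upow by simp
qed

lemma upow_deriv: "(upow m has_vector_derivative (of_nat m * upow (m - 1) x)) (at x)"
proof -
  have "((\<lambda>z. (z - \<i>) ^ m) has_field_derivative (of_nat m * (complex_of_real x - \<i>) ^ (m - 1))) (at (complex_of_real x))"
    by (auto intro!: derivative_eq_intros)
  from has_vector_derivative_real_field[OF this] show ?thesis
    unfolding upow_def by simp
qed

lemma upow_cont: "continuous_on UNIV (upow m)"
  unfolding upow_def by (auto intro!: continuous_intros)

lemma inv_upow: "1 \<le> m \<Longrightarrow> FT_L1 (\<lambda>x. 1 / upow m x)"
proof (induction m)
  case 0 then show ?case by simp
next
  case (Suc m)
  show ?case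
  proof (cases "m = 0")
    case True
    then show ?thesis using FT_L1_inv_u unfolding upow_def by simp
  next
    case False
    have "FT_L1 (\<lambda>x. (1 / upow m x) * (1 / upow 1 x))"
      using Suc False FT_L1_inv_u by (intro FT_L1_mult) (auto simp: upow_def)
    moreover have "(1 / upow m x) * (1 / upow 1 x) = 1 / upow (Suc m) x" for x
      using upow_add[of m 1 x] by simp
    ultimately show ?thesis by simp
  qed
qed

definition Bd :: "(real \<Rightarrow> complex) \<Rightarrow> nat \<Rightarrow> bool" where
  "Bd \<phi> p \<longleftrightarrow> (\<exists>K. \<forall>x. norm (\<phi> x * upow p x) \<le> K)"

lemma Bd_mono: "Bd \<phi> p \<Longrightarrow> q \<le> p \<Longrightarrow> Bd \<phi> q"
  unfolding Bd_def
proof (elim exE)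
  fix K assume K: "\<forall>x. norm (\<phi> x * upow p x) \<le> K" and q: "q \<le> p"
  have "norm (\<phi> x * upow q x) \<le> K" for x
  proof -
    have "norm (\<phi> x * upow q x) = norm (\<phi> x) * norm (upow q x)" by (simp add: norm_mult)
    also have "\<dots> \<le> norm (\<phi> x) * norm (upow p x)" by (rule mult_left_mono[OF norm_upow_mono[OF q]]) simp
    also have "\<dots> \<le> K" using K by (simp add: norm_mult)
    finally show ?thesis .
  qed
  then show "\<exists>K. \<forall>x. norm (\<phi> x * upow q x) \<le> K" by blast
qed

lemma C0_Bd: "(\<lambda>x. \<phi> x * upow p x) \<in> C0 \<Longrightarrow> Bd \<phi> p"
  unfolding C0_def Bd_def using bounded_C0_fun by blast

lemma tendsto_inv_norm_at_infinity: "((\<lambda>x::real. K / \<bar>x\<bar>) \<longlongrightarrow> 0) at_infinity"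
proof -
  have "filterlim (\<lambda>x::real. \<bar>x\<bar>) at_top at_infinity"
    unfolding at_infinity_eq_at_top_bot by (rule filterlim_sup) real_asymp+
  from tendsto_inverse_0_at_top[OF this]
  have "((\<lambda>x::real. inverse \<bar>x\<bar>) \<longlongrightarrow> 0) at_infinity" .
  then have "((\<lambda>x::real. K * inverse \<bar>x\<bar>) \<longlongrightarrow> K * 0) at_infinity"
    by (intro tendsto_intros)
  then show ?thesis by (simp add: divide_inverse)
qed

lemma Bd_C0:
  assumes cont: "continuous_on UNIV \<phi>" and bd: "Bd \<phi> p" and q: "q < p"
  shows "(\<lambda>x. \<phi> x * upow q x) \<in> C0"
  unfolding C0_def
proof (intro CollectI conjI)
  show "continuous_on UNIV (\<lambda>x. \<phi> x * upow q x)"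
    by (intro continuous_intros cont upow_cont)
  obtain K where K: "\<And>x. norm (\<phi> x * upow p x) \<le> K" using bd unfolding Bd_def by blast
  show "((\<lambda>x. \<phi> x * upow q x) \<longlongrightarrow> 0) at_infinity"
  proof (rule Lim_null_comparison[OF _ tendsto_inv_norm_at_infinity[of K]])
    have cal: "norm (\<phi> x * upow q x) \<le> K / \<bar>x\<bar>" if "x \<noteq> 0" for x
    proof -
      have "norm (\<phi> x * upow q x) * \<bar>x\<bar> \<le> norm (\<phi> x * upow q x) * norm (upow (p - q) x)"
      proof (rule mult_left_mono)
        have "\<bar>x\<bar> \<le> norm (complex_of_real x - \<i>)" by (rule norm_u_ge_abs)
        also have "\<dots> = norm (upow 1 x)" by (simp add: upow_def)
        also have "\<dots> \<le> norm (upow (p - q) x)" using q by (intro norm_upow_mono) simp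
        finally show "\<bar>x\<bar> \<le> norm (upow (p - q) x)" .
      qed simp
      also have "\<dots> = norm (\<phi> x * upow p x)"
      proof -
        have eqU: "upow p x = upow q x * upow (p - q) x"
          using upow_add[of q "p - q" x] q by simp
        show ?thesis by (simp only: eqU norm_mult mult.assoc)
      qed
      also have "\<dots> \<le> K" by (rule K)
      finally have "norm (\<phi> x * upow q x) * \<bar>x\<bar> \<le> K" .
      moreover have "0 < \<bar>x\<bar>" using that by simp
      ultimately show ?thesis by (simp add: pos_le_divide_eq)
    qed
    have ev: "\<forall>\<^sub>F x in at_infinity. (x::real) \<noteq> 0"
      unfolding eventually_at_infinity by (rule exI[of _ 1]) auto
    show "\<forall>\<^sub>F x in at_infinity. norm (\<phi> x * upow q x) \<le> K / \<bar>x\<bar>"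
      using ev by (rule eventually_mono) (rule cal)
  qed
qed

lemma C0_add: "f \<in> C0 \<Longrightarrow> g \<in> C0 \<Longrightarrow> (\<lambda>x. f x + g x) \<in> C0"
  unfolding C0_def mem_Collect_eq
proof (elim conjE, intro conjI)
  assume "continuous_on UNIV f" "continuous_on UNIV g"
  then show "continuous_on UNIV (\<lambda>x. f x + g x)" by (rule continuous_on_add)
  assume "(f \<longlongrightarrow> 0) at_infinity" "(g \<longlongrightarrow> 0) at_infinity"
  from tendsto_add[OF this] show "((\<lambda>x. f x + g x) \<longlongrightarrow> 0) at_infinity" by simp
qed

lemma C0_cmult: "f \<in> C0 \<Longrightarrow> (\<lambda>x. c * f x) \<in> C0"
  unfolding C0_def mem_Collect_eq
proof (elim conjE, intro conjI)
  assume "continuous_on UNIV f"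
  then show "continuous_on UNIV (\<lambda>x. c * f x)" by (intro continuous_intros)
  assume "(f \<longlongrightarrow> 0) at_infinity"
  from tendsto_mult[OF tendsto_const this, of c] show "((\<lambda>x. c * f x) \<longlongrightarrow> 0) at_infinity" by simp
qed

lemma nderiv_0[simp]: "nderiv 0 f = f" unfolding nderiv_def by simp

lemma nderiv_Suc: "nderiv (Suc l) f = vderiv (nderiv l f)"
  unfolding nderiv_def by simp

lemma nderiv_Suc': "nderiv (Suc l) f = nderiv l (vderiv f)"
  unfolding nderiv_def funpow_Suc_right by simp

lemma Ck_deriv:
  assumes "f \<in> Ck k" "l < k"
  shows "(nderiv l f has_vector_derivative nderiv (Suc l) f x) (at x)"
proof -
  have "nderiv l f differentiable (at x)" using assms unfolding Ck_def by blast
  from vector_derivative_works[THEN iffD1, OF this]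
  show ?thesis unfolding nderiv_Suc vderiv_def .
qed

lemma Ck_cont:
  assumes "f \<in> Ck k" "l \<le> k"
  shows "continuous_on UNIV (nderiv l f)"
proof (cases "l = k")
  case True then show ?thesis using assms unfolding Ck_def by auto
next
  case False
  then have "l < k" using assms by simp
  then have "\<And>x. (nderiv l f has_vector_derivative nderiv (Suc l) f x) (at x within UNIV)"
    using Ck_deriv[OF assms(1)] by blast
  then show ?thesis by (rule continuous_on_vector_derivative)
qed

lemma prod_deriv:
  assumes "f \<in> Ck k" "l < k"
  shows "((\<lambda>x. nderiv l f x * upow s x) has_vector_derivative
     (nderiv (Suc l) f x * upow s x + of_nat s * (nderiv l f x * upow (s - 1) x))) (at x)"
proof -
  have "((\<lambda>x. nderiv l f x * upow s x) has_vector_derivative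
     (nderiv l f x * (of_nat s * upow (s - 1) x) + nderiv (Suc l) f x * upow s x)) (at x)"
    by (rule has_vector_derivative_mult[OF Ck_deriv[OF assms] upow_deriv])
  then show ?thesis by (simp add: algebra_simps)
qed

lemma part_a:
  assumes n1: "1 \<le> n" and k1: "1 \<le> k" and fQ: "f \<in> Qnk n k"
    and lk0: "l0 \<le> k" and sl0: "s0 \<le> max n l0"
  shows "(\<lambda>x. nderiv l0 f x * upow s0 x) \<in> C0 \<and> FT_L1 (\<lambda>x. nderiv l0 f x * upow s0 x)"
proof -
  have fC: "f \<in> Ck k" using fQ unfolding Qnk_def by simp
  have Q1b: "bounded (range (\<lambda>x. f x * upow (2*n) x))" using fQ unfolding Qnk_def by simp
  have Q2: "\<And>l. 1 \<le> l \<Longrightarrow> l \<le> k \<Longrightarrow> (\<lambda>x. nderiv l f x * upow (n+l+1) x) \<in> C0"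
    using fQ unfolding Qnk_def by simp
  have Q3c: "(\<lambda>x. nderiv k f x * upow (max k n) x) \<in> C0" using fQ unfolding Qnk_def by simp
  have Q3f: "FT_L1 (\<lambda>x. nderiv k f x * upow (max k n) x)" using fQ unfolding Qnk_def by simp
  have BdA: "Bd (nderiv l f) (n+l+1)" if "1 \<le> l" "l \<le> k" for l
    using C0_Bd[OF Q2[OF that]] .
  have Bd0: "Bd f (2*n)"
    using Q1b unfolding Bd_def bounded_iff by auto
  have BdL: "Bd (nderiv l f) (max n l + 1)" if "l \<le> k" for l
  proof (cases "l = 0")
    case True
    then show ?thesis using Bd_mono[OF Bd0, of "n + 1"] n1 by simp
  next
    case False
    then show ?thesis using Bd_mono[OF BdA[of l], of "max n l + 1"] that by simp
  qed
  have C0part: "(\<lambda>x. nderiv l f x * upow s x) \<in> C0" if "l \<le> k" "s \<le> max n l" for l s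
    by (rule Bd_C0[OF Ck_cont[OF fC that(1)] BdL[OF that(1)]]) (use that in simp)
  have base: "FT_L1 (\<lambda>x. nderiv k f x * upow s x)" if "s \<le> max n k" for s
  proof (cases "s = max k n")
    case True then show ?thesis using Q3f by simp
  next
    case False
    define M where "M = max k n"
    have sM: "s < M" using that False unfolding M_def by simp
    have i: "FT_L1 (\<lambda>x. 1 / upow (M - s) x)" using sM by (intro inv_upow) simp
    have q: "FT_L1 (\<lambda>x. nderiv k f x * upow M x)" using Q3f unfolding M_def .
    have "FT_L1 (\<lambda>x. (nderiv k f x * upow M x) * (1 / upow (M - s) x))"
      by (rule FT_L1_mult[OF q i])
    moreover have "(nderiv k f x * upow M x) * (1 / upow (M - s) x) = nderiv k f x * upow s x" for x
    proof -
      have "upow M x = upow s x * upow (M - s) x" using upow_add[of s "M - s" x] sM by simp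
      then show ?thesis using upow_nz[of "M - s" x] by simp
    qed
    ultimately show ?thesis by simp
  qed
  have kl: "FT_L1 (\<lambda>x. nderiv l f x * upow s x)"
    if lk: "l < k" and IH: "\<And>s. s \<le> max n (Suc l) \<Longrightarrow> FT_L1 (\<lambda>x. nderiv (Suc l) f x * upow s x)"
      and sl: "s \<le> max n l" and prev: "s \<noteq> 0 \<Longrightarrow> FT_L1 (\<lambda>x. nderiv l f x * upow (s - 1) x)" for l s
  proof -
    define g' where "g' x = nderiv (Suc l) f x * upow s x + of_nat s * (nderiv l f x * upow (s - 1) x)" for x
    have lk': "Suc l \<le> k" "l \<le> k" using lk by auto
    obtain K1 where K1: "\<And>x. norm (nderiv (Suc l) f x * upow (s + 2) x) \<le> K1"
    proof -
      have "Bd (nderiv (Suc l) f) (s + 2)"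
        by (rule Bd_mono[OF BdA[of "Suc l"]]) (use lk' sl in auto)
      then show ?thesis using that unfolding Bd_def by blast
    qed
    obtain K2 where K2: "\<And>x. norm (nderiv l f x * upow (s + 1) x) \<le> K2"
    proof -
      have "Bd (nderiv l f) (s + 1)"
        by (rule Bd_mono[OF BdL[OF lk'(2)]]) (use sl in auto)
      then show ?thesis using that unfolding Bd_def by blast
    qed
    show ?thesis
    proof (rule KL[where g'=g' and B="K1 + real s * K2"])
      show "((\<lambda>x. nderiv l f x * upow s x) has_vector_derivative g' x) (at x)" for x
        unfolding g'_def by (rule prod_deriv[OF fC lk])
      show "continuous_on UNIV g'"
        unfolding g'_def using Ck_cont[OF fC lk'(1)] Ck_cont[OF fC lk'(2)]
        by (intro continuous_intros upow_cont) auto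
      show "((\<lambda>x. nderiv l f x * upow s x) \<longlongrightarrow> 0) at_infinity"
        using C0part[OF lk'(2) sl] unfolding C0_def by simp
      show "FT_L1 g'"
        unfolding g'_def
      proof (rule FT_L1_add)
        show "FT_L1 (\<lambda>x. nderiv (Suc l) f x * upow s x)" using sl by (intro IH) simp
        show "FT_L1 (\<lambda>x. of_nat s * (nderiv l f x * upow (s - 1) x))"
        proof (cases "s = 0")
          case True then show ?thesis using FT_L1_zero by simp
        next
          case False then show ?thesis using prev by (intro FT_L1_cmult)
        qed
      qed
      fix t
      have "norm (g' t) * (1 + t^2) = norm (g' t * upow 2 t)"
        by (simp add: norm_mult norm_upow2)
      also have "g' t * upow 2 t = nderiv (Suc l) f t * upow (s + 2) t + of_nat s * (nderiv l f t * upow (s - 1) t * upow 2 t)"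
        unfolding g'_def using upow_add[of s 2 t] by (simp add: algebra_simps)
      also have "norm \<dots> \<le> norm (nderiv (Suc l) f t * upow (s + 2) t) + norm (of_nat s * (nderiv l f t * upow (s - 1) t * upow 2 t))"
        by (rule norm_triangle_ineq)
      also have "\<dots> \<le> K1 + real s * K2"
      proof (rule add_mono[OF K1])
        show "norm (of_nat s * (nderiv l f t * upow (s - 1) t * upow 2 t)) \<le> real s * K2"
        proof (cases "s = 0")
          case True then show ?thesis by simp
        next
          case False
          then have "upow (s - 1) t * upow 2 t = upow (s + 1) t"
            using upow_add[of "s - 1" 2 t] by simp
          then have "norm (of_nat s * (nderiv l f t * upow (s - 1) t * upow 2 t)) = real s * norm (nderiv l f t * upow (s + 1) t)"
            by (simp add: norm_mult mult.assoc)
          also have "\<dots> \<le> real s * K2" by (rule mult_left_mono[OF K2]) simp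
          finally show ?thesis .
        qed
      qed
      finally show "norm (g' t) * (1 + t^2) \<le> K1 + real s * K2" .
    qed
  qed
  have step: "FT_L1 (\<lambda>x. nderiv l f x * upow s x)"
    if lk: "l < k" and IH: "\<And>s. s \<le> max n (Suc l) \<Longrightarrow> FT_L1 (\<lambda>x. nderiv (Suc l) f x * upow s x)"
      and sl: "s \<le> max n l" for l s
    using sl
  proof (induction s)
    case 0
    show ?case by (rule kl[OF lk IH]) auto
  next
    case (Suc s)
    show ?case by (rule kl[OF lk IH]) (use Suc in auto)
  qed
  have down: "\<forall>s. s \<le> max n (k - j) \<longrightarrow> FT_L1 (\<lambda>x. nderiv (k - j) f x * upow s x)" if "j \<le> k" for j
    using that
  proof (induction j)
    case 0 then show ?case using base by simp
  next
    case (Suc j)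
    have e: "Suc (k - Suc j) = k - j" using Suc.prems by simp
    have "k - Suc j < k" using Suc.prems by simp
    then show ?case using step[of "k - Suc j"] Suc e by auto
  qed
  have "FT_L1 (\<lambda>x. nderiv (k - (k - l0)) f x * upow s0 x)" using down[of "k - l0"] lk0 sl0 by simp
  then show ?thesis using C0part[OF lk0 sl0] lk0 by simp
qed

definition Dm :: "nat \<Rightarrow> (real \<Rightarrow> complex) \<Rightarrow> bool" where
  "Dm m \<phi> \<longleftrightarrow> (\<forall>i<m. \<forall>x. nderiv i \<phi> differentiable (at x))"

lemma Dm_0[simp]: "Dm 0 \<phi>" unfolding Dm_def by simp

lemma Dm_Suc: "Dm (Suc m) \<phi> \<longleftrightarrow> (\<forall>x. \<phi> differentiable (at x)) \<and> Dm m (vderiv \<phi>)"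
  unfolding Dm_def
proof
  assume a: "\<forall>i<Suc m. \<forall>x. nderiv i \<phi> differentiable at x"
  show "(\<forall>x. \<phi> differentiable at x) \<and> (\<forall>i<m. \<forall>x. nderiv i (vderiv \<phi>) differentiable at x)"
  proof
    show "\<forall>x. \<phi> differentiable at x" using a[rule_format, of 0] by simp
    show "\<forall>i<m. \<forall>x. nderiv i (vderiv \<phi>) differentiable at x"
      using a by (simp add: nderiv_Suc'[symmetric])
  qed
next
  assume a: "(\<forall>x. \<phi> differentiable at x) \<and> (\<forall>i<m. \<forall>x. nderiv i (vderiv \<phi>) differentiable at x)"
  show "\<forall>i<Suc m. \<forall>x. nderiv i \<phi> differentiable at x"
  proof (intro allI impI)
    fix i x assume i: "i < Suc m"
    show "nderiv i \<phi> differentiable at x"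
    proof (cases i)
      case 0 then show ?thesis using a by simp
    next
      case (Suc i') then show ?thesis using a i by (simp add: nderiv_Suc')
    qed
  qed
qed

lemma vderiv_eq:
  assumes "\<And>x. (\<phi> has_vector_derivative \<phi>' x) (at x)"
  shows "vderiv \<phi> = \<phi>'"
  unfolding vderiv_def using vector_derivative_at[OF assms] by auto

lemma vd_of_diff: "\<phi> differentiable (at x) \<Longrightarrow> (\<phi> has_vector_derivative vderiv \<phi> x) (at x)"
  unfolding vderiv_def by (simp add: vector_derivative_works[symmetric])

lemma nderiv_add:
  "Dm m \<phi>1 \<Longrightarrow> Dm m \<phi>2 \<Longrightarrow> Dm m (\<lambda>x. \<phi>1 x + \<phi>2 x) \<and> nderiv m (\<lambda>x. \<phi>1 x + \<phi>2 x) = (\<lambda>x. nderiv m \<phi>1 x + nderiv m \<phi>2 x)"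
proof (induction m arbitrary: \<phi>1 \<phi>2)
  case 0 then show ?case by simp
next
  case (Suc m)
  have d1: "\<And>x. \<phi>1 differentiable (at x)" and D1: "Dm m (vderiv \<phi>1)"
    and d2: "\<And>x. \<phi>2 differentiable (at x)" and D2: "Dm m (vderiv \<phi>2)"
    using Suc.prems unfolding Dm_Suc by auto
  have vs: "vderiv (\<lambda>x. \<phi>1 x + \<phi>2 x) = (\<lambda>x. vderiv \<phi>1 x + vderiv \<phi>2 x)"
    by (rule vderiv_eq) (intro has_vector_derivative_add vd_of_diff d1 d2)
  have IH: "Dm m (\<lambda>x. vderiv \<phi>1 x + vderiv \<phi>2 x) \<and> nderiv m (\<lambda>x. vderiv \<phi>1 x + vderiv \<phi>2 x) = (\<lambda>x. nderiv m (vderiv \<phi>1) x + nderiv m (vderiv \<phi>2) x)"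
    by (rule Suc.IH[OF D1 D2])
  have dsum: "\<And>x. (\<lambda>x. \<phi>1 x + \<phi>2 x) differentiable (at x)"
    using differentiableI_vector[OF has_vector_derivative_add[OF vd_of_diff[OF d1] vd_of_diff[OF d2]]] by blast
  show ?case
    unfolding Dm_Suc nderiv_Suc' vs using IH dsum by simp
qed

lemma nderiv_cmult:
  "Dm m \<phi> \<Longrightarrow> Dm m (\<lambda>x. c * \<phi> x) \<and> nderiv m (\<lambda>x. c * \<phi> x) = (\<lambda>x. c * nderiv m \<phi> x)"
proof (induction m arbitrary: \<phi>)
  case 0 then show ?case by simp
next
  case (Suc m)
  have d1: "\<And>x. \<phi> differentiable (at x)" and D1: "Dm m (vderiv \<phi>)"
    using Suc.prems unfolding Dm_Suc by auto
  have vs: "vderiv (\<lambda>x. c * \<phi> x) = (\<lambda>x. c * vderiv \<phi> x)"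
    by (rule vderiv_eq) (intro has_vector_derivative_mult_right vd_of_diff d1)
  have IH: "Dm m (\<lambda>x. c * vderiv \<phi> x) \<and> nderiv m (\<lambda>x. c * vderiv \<phi> x) = (\<lambda>x. c * nderiv m (vderiv \<phi>) x)"
    by (rule Suc.IH[OF D1])
  have dsum: "\<And>x. (\<lambda>x. c * \<phi> x) differentiable (at x)"
    using differentiableI_vector[OF has_vector_derivative_mult_right[OF vd_of_diff[OF d1]]] by blast
  show ?case
    unfolding Dm_Suc nderiv_Suc' vs using IH dsum by simp
qed

lemma vderiv_prod:
  assumes "f \<in> Ck k" "j < k"
  shows "vderiv (\<lambda>x. nderiv j f x * upow t x) =
    (\<lambda>x. nderiv (Suc j) f x * upow t x + of_nat t * (nderiv j f x * upow (t - 1) x))"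
  by (rule vderiv_eq) (rule prod_deriv[OF assms])

lemma Dm_prod:
  assumes fC: "f \<in> Ck k"
  shows "j + m \<le> k \<Longrightarrow> Dm m (\<lambda>x. nderiv j f x * upow t x)"
proof (induction m arbitrary: j t)
  case 0 then show ?case by simp
next
  case (Suc m)
  have jk: "j < k" using Suc.prems by simp
  have A: "Dm m (\<lambda>x. nderiv (Suc j) f x * upow t x)" using Suc.prems by (intro Suc.IH) simp
  have B: "Dm m (\<lambda>x. nderiv j f x * upow (t - 1) x)" using Suc.prems by (intro Suc.IH) simp
  have C: "Dm m (\<lambda>x. of_nat t * (nderiv j f x * upow (t - 1) x))" using nderiv_cmult[OF B] by simp
  show ?case
    unfolding Dm_Suc vderiv_prod[OF fC jk]
    using nderiv_add[OF A C] prod_deriv[OF fC jk] by (auto intro: differentiableI_vector)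
qed

lemma part_b_gen:
  assumes fC: "f \<in> Ck k"
    and pa: "\<And>l s. l \<le> k \<Longrightarrow> s \<le> max n l \<Longrightarrow>
      (\<lambda>x. nderiv l f x * upow s x) \<in> C0 \<and> FT_L1 (\<lambda>x. nderiv l f x * upow s x)"
  shows "j + m \<le> k \<Longrightarrow> t \<le> max n (j + m) \<Longrightarrow>
      nderiv m (\<lambda>x. nderiv j f x * upow t x) \<in> C0 \<and> FT_L1 (nderiv m (\<lambda>x. nderiv j f x * upow t x))"
proof (induction m arbitrary: j t)
  case 0 then show ?case using pa[of j t] by simp
next
  case (Suc m)
  have jk: "j < k" using Suc.prems by simp
  have A: "Dm m (\<lambda>x. nderiv (Suc j) f x * upow t x)" using Suc.prems by (intro Dm_prod[OF fC]) simp
  have B: "Dm m (\<lambda>x. nderiv j f x * upow (t - 1) x)" using Suc.prems by (intro Dm_prod[OF fC]) simp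
  have eq: "nderiv (Suc m) (\<lambda>x. nderiv j f x * upow t x) =
      (\<lambda>x. nderiv m (\<lambda>x. nderiv (Suc j) f x * upow t x) x + of_nat t * nderiv m (\<lambda>x. nderiv j f x * upow (t - 1) x) x)"
  proof -
    have "nderiv (Suc m) (\<lambda>x. nderiv j f x * upow t x) = nderiv m (vderiv (\<lambda>x. nderiv j f x * upow t x))"
      by (rule nderiv_Suc')
    also have "\<dots> = nderiv m (\<lambda>x. nderiv (Suc j) f x * upow t x + of_nat t * (nderiv j f x * upow (t - 1) x))"
      unfolding vderiv_prod[OF fC jk] ..
    also have "\<dots> = (\<lambda>x. nderiv m (\<lambda>x. nderiv (Suc j) f x * upow t x) x + nderiv m (\<lambda>x. of_nat t * (nderiv j f x * upow (t - 1) x)) x)"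
      using nderiv_add[OF A conjunct1[OF nderiv_cmult[OF B]]] by blast
    also have "\<dots> = (\<lambda>x. nderiv m (\<lambda>x. nderiv (Suc j) f x * upow t x) x + of_nat t * nderiv m (\<lambda>x. nderiv j f x * upow (t - 1) x) x)"
      using conjunct2[OF nderiv_cmult[OF B, of "of_nat t"]] by simp
    finally show ?thesis .
  qed
  have IH1: "nderiv m (\<lambda>x. nderiv (Suc j) f x * upow t x) \<in> C0 \<and> FT_L1 (nderiv m (\<lambda>x. nderiv (Suc j) f x * upow t x))"
    using Suc.prems by (intro Suc.IH) auto
  have IH2: "nderiv m (\<lambda>x. nderiv j f x * upow (t - 1) x) \<in> C0 \<and> FT_L1 (nderiv m (\<lambda>x. nderiv j f x * upow (t - 1) x))"
    using Suc.prems by (intro Suc.IH) auto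
  show ?case unfolding eq
    using IH1 IH2 by (auto intro!: C0_add C0_cmult FT_L1_add FT_L1_cmult)
qed

lemma FT_W0:
  assumes "g \<in> C0" "FT_L1 g"
  shows "g \<in> W0"
proof -
  obtain h where h: "integrable lborel h" and geq: "\<And>x. g x = (\<integral>y. exp (\<i> * complex_of_real (x * y)) * h y \<partial>lborel)"
    using assms(2) unfolding FT_L1_def by blast
  have [measurable]: "h \<in> borel_measurable borel" using h by auto
  define M where "M = density lborel (\<lambda>y. ennreal (norm (h y)))"
  define h' where "h' y = sgn (h y)" for y
  have [measurable]: "h' \<in> borel_measurable borel" unfolding h'_def by measurable
  have hh: "norm (h y) *\<^sub>R h' y = h y" for y
    unfolding h'_def by (cases "h y = 0") (simp_all add: sgn_div_norm)
  have fin: "finite_measure M"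
  proof
    have "emeasure M (space M) = (\<integral>\<^sup>+y. ennreal (norm (h y)) \<partial>lborel)"
      unfolding M_def by (simp add: emeasure_density)
    also have "\<dots> < \<infinity>" using h by (simp add: integrable_iff_bounded)
    finally show "emeasure M (space M) \<noteq> \<infinity>" by simp
  qed
  have sets: "sets M = sets borel" unfolding M_def by simp
  have int: "integrable M h'"
    unfolding M_def by (subst integrable_density) (auto simp: hh h)
  have rep: "g x = (\<integral>y. exp (\<i> * complex_of_real (x * y)) * h' y \<partial>M)" for x
  proof -
    have "(\<integral>y. exp (\<i> * complex_of_real (x * y)) * h' y \<partial>M) = (\<integral>y. norm (h y) *\<^sub>R (exp (\<i> * complex_of_real (x * y)) * h' y) \<partial>lborel)"
      unfolding M_def by (subst integral_density) auto
    also have "\<dots> = (\<integral>y. exp (\<i> * complex_of_real (x * y)) * h y \<partial>lborel)"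
      by (intro Bochner_Integration.integral_cong refl) (metis hh mult_scaleR_right)
    finally show ?thesis using geq by simp
  qed
  show ?thesis unfolding W0_def using assms(1) fin sets int rep by blast
qed

lemma parts_ab:
  assumes n1: "1 \<le> n" and k1: "1 \<le> k" and fQ: "f \<in> Qnk n k"
  shows "(\<forall>s l. s \<le> max n l \<and> l \<le> k \<longrightarrow>
            (\<lambda>x. nderiv l f x * upow s x) \<in> C0 \<and> FT_L1 (\<lambda>x. nderiv l f x * upow s x))
       \<and> (\<forall>s l. s \<le> max n l \<and> l \<le> k \<longrightarrow>
            nderiv l (\<lambda>x. f x * upow s x) \<in> C0 \<and> FT_L1 (nderiv l (\<lambda>x. f x * upow s x)))"
proof -
  have fC: "f \<in> Ck k" using fQ unfolding Qnk_def by simp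
  have pa: "\<And>l s. l \<le> k \<Longrightarrow> s \<le> max n l \<Longrightarrow>
      (\<lambda>x. nderiv l f x * upow s x) \<in> C0 \<and> FT_L1 (\<lambda>x. nderiv l f x * upow s x)"
    by (rule part_a[OF n1 k1 fQ])
  have pb: "nderiv l (\<lambda>x. f x * upow s x) \<in> C0 \<and> FT_L1 (nderiv l (\<lambda>x. f x * upow s x))"
    if "s \<le> max n l" "l \<le> k" for s l
    using part_b_gen[OF fC pa, where j=0 and m=l and t=s] that by simp
  show ?thesis using pa pb by blast
qed

theorem proposition5p2:
  fixes n k :: nat and f :: "real \<Rightarrow> complex"
  assumes "1 \<le> n" and "1 \<le> k"
    and "f \<in> Qnk n k"
  shows "(\<forall>s l. s \<le> max n l \<and> l \<le> k \<longrightarrow>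
            (\<lambda>x. nderiv l f x * upow s x) \<in> C0 \<and> FT_L1 (\<lambda>x. nderiv l f x * upow s x))
       \<and> (\<forall>s l. s \<le> max n l \<and> l \<le> k \<longrightarrow>
            nderiv l (\<lambda>x. f x * upow s x) \<in> C0 \<and> FT_L1 (nderiv l (\<lambda>x. f x * upow s x)))
       \<and> Qnk n k \<subseteq> Wk k"
proof -
  have c: "Qnk n k \<subseteq> Wk k"
  proof
    fix g assume gQ: "g \<in> Qnk n k"
    have gC: "g \<in> Ck k" using gQ unfolding Qnk_def by simp
    have "nderiv p (\<lambda>x. g x * upow p x) \<in> W0" if "p \<le> k" for p
      using conjunct2[OF parts_ab[OF assms(1,2) gQ]] that by (intro FT_W0) auto
    then show "g \<in> Wk k" unfolding Wk_def using gC by blast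
  qed
  show ?thesis using parts_ab[OF assms] c by blast
qed

end
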